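(* Let $H:\mathbb{R}_+\to[0,1]$ be a measurable function with $\|H\|_1:=\int_0^\infty H(x)\,dx<\infty$ and $\|H\|_2^2:=\int_0^\infty H(x)^2\,dx<\|H\|_1$. Fix $\tau>0$, $\alpha>0$, and a positive integer $L$; set $R_L=\ln(\tau L)/(2\|H\|_1)$. Let $\mathcal{P}_L$ be a Poisson point process of unit intensity on the torus $[0,L]$ (with $0$ and $L$ identified), with circular distance $\rho^L(x,y)=\min\{|x-y|,L-|x-y|\}$, and let $\tilde h^L(x,y)=H(\rho^L(x,y)/R_L)\mathbb{1}\{\rho^L(x,y)\le R_L^{1+1/\alpha}\}$. Let $\mathcal{G}_{\tilde h^L}(\mathcal{P}_L)$ be the random graph on vertex set $\mathcal{P}_L$ in which, conditionally on $\mathcal{P}_L$, each pair of distinct nodes $x,y$ is joined by an edge with probability $\tilde h^L(x,y)$, independently over pairs. For $m\in\mathbb{N}$, divide the torus into segments $A_i=[(i-1)/m,i/m)$, $i\in\Gamma=\{1,\dots,mL\}$, with centres $x_i$, and let $I_i$ be the indicator that $A_i$ contains exactly one node of $\mathcal{P}_L$ and that node is isolated in $\mathcal{G}_{\tilde h^L}(\mathcal{P}_L)$. Let $B_i=\{j\in\Gamma:\rho^L(x_i,x_j)\le 3R_L^{1+1/\alpha}\}$, $p_i=\mathbb{E}[I_i]$, and $$b_3=\sum_{i\in\Gamma}\mathbb{E}\Big[\big|\mathbb{E}[I_i\mid (I_j:j\in\Gamma\setminus B_i)]-p_i\big|\Big].$$ Then $b_3=0$ for all $m$ sufficiently large. 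*)

theory Defs
  imports "HOL-Probability.Probability"
begin

type_synonym omega = "nat \<times> (nat \<Rightarrow> real) \<times> (nat \<times> nat \<Rightarrow> real)"

definition rhoL :: "real \<Rightarrow> real \<Rightarrow> real \<Rightarrow> real" where
  "rhoL L x y = min \<bar>x - y\<bar> (L - \<bar>x - y\<bar>)"

definition normH1 :: "(real \<Rightarrow> real) \<Rightarrow> real" where
  "normH1 H = (LBINT x:{0..}. H x)"

definition RL :: "(real \<Rightarrow> real) \<Rightarrow> real \<Rightarrow> nat \<Rightarrow> real" where
  "RL H \<tau> L = ln (\<tau> * real L) / (2 * normH1 H)"

definition htil :: "(real \<Rightarrow> real) \<Rightarrow> real \<Rightarrow> real \<Rightarrow> nat \<Rightarrow> real \<Rightarrow> real \<Rightarrow> real" where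
  "htil H \<tau> \<alpha> L x y =
     H (rhoL (real L) x y / RL H \<tau> L) *
     (if rhoL (real L) x y \<le> RL H \<tau> L powr (1 + 1 / \<alpha>) then 1 else 0)"

text \<open>Probability space: number of points N ~ Poisson(L), points X k i.i.d. uniform on [0,L)
  (so that the first N of them form a unit-intensity Poisson process on the torus), and
  i.i.d. uniform [0,1] edge marks U (k,l) used for the pair {k,l} with k < l.\<close>
definition PPP_space :: "nat \<Rightarrow> omega measure" where
  "PPP_space L =
     measure_pmf (poisson_pmf (real L)) \<Otimes>\<^sub>M
     ((PiM UNIV (\<lambda>_::nat. uniform_measure lborel {0..<real L})) \<Otimes>\<^sub>M
      (PiM UNIV (\<lambda>_::nat \<times> nat. uniform_measure lborel {0..1::real})))"

definition Npts :: "omega \<Rightarrow> nat" where "Npts \<omega> = fst \<omega>"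
definition Xpt :: "omega \<Rightarrow> nat \<Rightarrow> real" where "Xpt \<omega> = fst (snd \<omega>)"
definition Umark :: "omega \<Rightarrow> nat \<times> nat \<Rightarrow> real" where "Umark \<omega> = snd (snd \<omega>)"

text \<open>Nodes k and l (both < N) are joined iff k \<noteq> l and the mark of the pair is below
  the connection probability; conditionally on the points this happens independently
  with probability htil.\<close>
definition edge :: "(real \<Rightarrow> real) \<Rightarrow> real \<Rightarrow> real \<Rightarrow> nat \<Rightarrow> omega \<Rightarrow> nat \<Rightarrow> nat \<Rightarrow> bool" where
  "edge H \<tau> \<alpha> L \<omega> k l \<longleftrightarrow>
     k \<noteq> l \<and> Umark \<omega> (min k l, max k l) < htil H \<tau> \<alpha> L (Xpt \<omega> k) (Xpt \<omega> l)"

definition segA :: "nat \<Rightarrow> nat \<Rightarrow> real set" where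
  "segA m i = {(real i - 1) / real m ..< real i / real m}"

definition centre :: "nat \<Rightarrow> nat \<Rightarrow> real" where
  "centre m i = (2 * real i - 1) / (2 * real m)"

definition Gamma :: "nat \<Rightarrow> nat \<Rightarrow> nat set" where
  "Gamma m L = {1 .. m * L}"

definition Iind :: "(real \<Rightarrow> real) \<Rightarrow> real \<Rightarrow> real \<Rightarrow> nat \<Rightarrow> nat \<Rightarrow> nat \<Rightarrow> omega \<Rightarrow> real" where
  "Iind H \<tau> \<alpha> L m i \<omega> =
     (if card {k. k < Npts \<omega> \<and> Xpt \<omega> k \<in> segA m i} = 1 \<and>
         (\<forall>k < Npts \<omega>. Xpt \<omega> k \<in> segA m i \<longrightarrow> (\<forall>l < Npts \<omega>. \<not> edge H \<tau> \<alpha> L \<omega> k l))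
      then 1 else 0)"

definition Bnb :: "(real \<Rightarrow> real) \<Rightarrow> real \<Rightarrow> real \<Rightarrow> nat \<Rightarrow> nat \<Rightarrow> nat \<Rightarrow> nat set" where
  "Bnb H \<tau> \<alpha> L m i =
     {j \<in> Gamma m L. rhoL (real L) (centre m i) (centre m j) \<le> 3 * RL H \<tau> L powr (1 + 1 / \<alpha>)}"

definition Fout :: "(real \<Rightarrow> real) \<Rightarrow> real \<Rightarrow> real \<Rightarrow> nat \<Rightarrow> nat \<Rightarrow> nat \<Rightarrow> omega measure" where
  "Fout H \<tau> \<alpha> L m i =
     sigma (space (PPP_space L))
       (\<Union>j \<in> Gamma m L - Bnb H \<tau> \<alpha> L m i.
          {Iind H \<tau> \<alpha> L m j -` A \<inter> space (PPP_space L) | A. A \<in> sets borel})"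

definition pI :: "(real \<Rightarrow> real) \<Rightarrow> real \<Rightarrow> real \<Rightarrow> nat \<Rightarrow> nat \<Rightarrow> nat \<Rightarrow> real" where
  "pI H \<tau> \<alpha> L m i = (\<integral>\<omega>. Iind H \<tau> \<alpha> L m i \<omega> \<partial>PPP_space L)"

definition b3 :: "(real \<Rightarrow> real) \<Rightarrow> real \<Rightarrow> real \<Rightarrow> nat \<Rightarrow> nat \<Rightarrow> real" where
  "b3 H \<tau> \<alpha> L m =
     (\<Sum>i \<in> Gamma m L.
        \<integral>\<omega>. \<bar>real_cond_exp (PPP_space L) (Fout H \<tau> \<alpha> L m i) (Iind H \<tau> \<alpha> L m i) \<omega>
               - pI H \<tau> \<alpha> L m i\<bar> \<partial>PPP_space L)"

end

theory Submission
  imports Defs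
begin

definition uX :: "nat \<Rightarrow> real measure" where "uX L = uniform_measure lborel {0..<real L}"
definition uU :: "real measure" where "uU = uniform_measure lborel {0..1::real}"
definition PX :: "nat \<Rightarrow> (nat \<Rightarrow> real) measure" where "PX L = PiM UNIV (\<lambda>_. uX L)"
definition PU :: "(nat \<times> nat \<Rightarrow> real) measure" where "PU = PiM UNIV (\<lambda>_. uU)"
definition Q :: "nat \<Rightarrow> ((nat \<Rightarrow> real) \<times> (nat \<times> nat \<Rightarrow> real)) measure" where
  "Q L = PX L \<Otimes>\<^sub>M PU"

lemma PPP_Q: "PPP_space L = measure_pmf (poisson_pmf (real L)) \<Otimes>\<^sub>M Q L"
  by (simp add: PPP_space_def Q_def PX_def PU_def uX_def uU_def)

lemma prob_uX: "L > 0 \<Longrightarrow> prob_space (uX L)"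
  unfolding uX_def by (intro prob_space_uniform_measure) auto
lemma prob_uU: "prob_space uU"
  unfolding uU_def by (intro prob_space_uniform_measure) auto
lemma sets_uX[simp, measurable_cong]: "sets (uX L) = sets borel" by (simp add: uX_def)
lemma sets_uU[simp, measurable_cong]: "sets uU = sets borel" by (simp add: uU_def)
lemma space_uX[simp]: "space (uX L) = UNIV" by (simp add: uX_def)
lemma space_uU[simp]: "space uU = UNIV" by (simp add: uU_def)

lemma prob_PX: "L > 0 \<Longrightarrow> prob_space (PX L)"
  unfolding PX_def by (intro prob_space_PiM prob_uX)
lemma prob_PU: "prob_space PU"
  unfolding PU_def by (intro prob_space_PiM prob_uU)
lemma prob_Q: "L > 0 \<Longrightarrow> prob_space (Q L)"
  unfolding Q_def by (intro prob_space_pair prob_PX prob_PU)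
lemma space_PX[simp]: "space (PX L) = UNIV" by (simp add: PX_def space_PiM)
lemma space_PU[simp]: "space PU = UNIV" by (simp add: PU_def space_PiM)
lemma space_Q[simp]: "space (Q L) = UNIV" by (simp add: Q_def space_pair_measure)

definition Mz :: "nat \<Rightarrow> nat + nat \<times> nat \<Rightarrow> real measure" where
  "Mz L i = (case i of Inl _ \<Rightarrow> uX L | Inr _ \<Rightarrow> uU)"
definition Zc :: "nat + nat \<times> nat \<Rightarrow> (nat \<Rightarrow> real) \<times> (nat \<times> nat \<Rightarrow> real) \<Rightarrow> real" where
  "Zc i \<omega> = (case i of Inl k \<Rightarrow> fst \<omega> k | Inr p \<Rightarrow> snd \<omega> p)"

lemma sets_Mz[simp]: "sets (Mz L i) = sets borel" by (simp add: Mz_def split: sum.split)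
lemma space_Mz[simp]: "space (Mz L i) = UNIV" by (simp add: Mz_def split: sum.split)

lemma Zc_meas[measurable]: "Zc i \<in> borel_measurable (Q L)"
proof (cases i)
  case (Inl k)
  have "(\<lambda>\<omega>. fst \<omega> k) \<in> borel_measurable (Q L)"
    unfolding Q_def PX_def by measurable
  then show ?thesis using Inl by (simp add: Zc_def[abs_def])
next
  case (Inr p)
  have "(\<lambda>\<omega>. snd \<omega> p) \<in> borel_measurable (Q L)"
    unfolding Q_def PU_def by measurable
  then show ?thesis using Inr by (simp add: Zc_def[abs_def])
qed

lemma Zc_meas_Mz: "Zc i \<in> measurable (Q L) (Mz L i)"
  using Zc_meas[of i L] by (simp add: measurable_def)

lemma Zvec_meas: "(\<lambda>\<omega> i. Zc i \<omega>) \<in> measurable (Q L) (PiM UNIV (Mz L))"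
  by (rule measurable_PiM_single') (auto intro: Zc_meas_Mz)

lemma iso_Q:
  assumes L: "L > 0"
  shows "distr (Q L) (PiM UNIV (Mz L)) (\<lambda>\<omega> i. Zc i \<omega>) = PiM UNIV (Mz L)"
proof (rule measure_eqI_PiM_infinite)
  interpret Qp: prob_space "Q L" using prob_Q[OF L] .
  show "finite_measure (distr (Q L) (PiM UNIV (Mz L)) (\<lambda>\<omega> i. Zc i \<omega>))"
    by (intro prob_space.finite_measure Qp.prob_space_distr Zvec_meas)
  fix J :: "(nat + nat \<times> nat) set" and A
  assume J: "finite J" "J \<subseteq> UNIV" and A: "\<And>i. i \<in> J \<Longrightarrow> A i \<in> sets (Mz L i)"
  have pMz: "prob_space (Mz L i)" for i using prob_uX[OF L] prob_uU by (simp add: Mz_def split: sum.split)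
  define J1 where "J1 = Inl -` J"
  define J2 where "J2 = Inr -` J"
  have fJ1: "finite J1" unfolding J1_def using J by (intro finite_vimageI) auto
  have fJ2: "finite J2" unfolding J2_def using J by (intro finite_vimageI) auto
  define S1 where "S1 = prod_emb UNIV (\<lambda>_. uX L) J1 (Pi\<^sub>E J1 (\<lambda>k. A (Inl k)))"
  define S2 where "S2 = prod_emb UNIV (\<lambda>_. uU) J2 (Pi\<^sub>E J2 (\<lambda>k. A (Inr k)))"
  have A1: "k \<in> J1 \<Longrightarrow> A (Inl k) \<in> sets (uX L)" for k using A[of "Inl k"] by (simp add: J1_def)
  have A2: "k \<in> J2 \<Longrightarrow> A (Inr k) \<in> sets uU" for k using A[of "Inr k"] by (simp add: J2_def)
  have S1: "S1 \<in> sets (PX L)" unfolding S1_def PX_def using A1 fJ1 by (intro sets_PiM_I) auto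
  have S2: "S2 \<in> sets PU" unfolding S2_def PU_def using A2 fJ2 by (intro sets_PiM_I) auto
  have pre: "(\<lambda>\<omega> i. Zc i \<omega>) -` prod_emb UNIV (Mz L) J (Pi\<^sub>E J A) \<inter> space (Q L) = S1 \<times> S2"
    by (auto simp: prod_emb_def S1_def S2_def J1_def J2_def PiE_iff Zc_def split: sum.splits)
  have "emeasure (distr (Q L) (PiM UNIV (Mz L)) (\<lambda>\<omega> i. Zc i \<omega>)) (prod_emb UNIV (Mz L) J (Pi\<^sub>E J A))
      = emeasure (Q L) (S1 \<times> S2)"
    using A J by (subst emeasure_distr[OF Zvec_meas]) (auto intro!: sets_PiM_I simp: pre[symmetric])
  also have "\<dots> = emeasure (PX L) S1 * emeasure PU S2"
    unfolding Q_def using prob_PU S1 S2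
    by (intro sigma_finite_measure.emeasure_pair_measure_Times) (auto intro: prob_space_imp_sigma_finite)
  also have "emeasure (PX L) S1 = (\<Prod>k\<in>J1. emeasure (uX L) (A (Inl k)))"
    unfolding PX_def S1_def using A1 fJ1 prob_uX[OF L] by (intro emeasure_PiM_emb) auto
  also have "emeasure PU S2 = (\<Prod>k\<in>J2. emeasure uU (A (Inr k)))"
    unfolding PU_def S2_def using A2 fJ2 prob_uU by (intro emeasure_PiM_emb) auto
  also have "(\<Prod>k\<in>J1. emeasure (uX L) (A (Inl k))) * (\<Prod>k\<in>J2. emeasure uU (A (Inr k)))
       = (\<Prod>i\<in>J. emeasure (Mz L i) (A i))"
  proof -
    have JJ: "J = Inl ` J1 \<union> Inr ` J2"
    proof (intro set_eqI iffI)
      fix x assume "x \<in> J" thus "x \<in> Inl ` J1 \<union> Inr ` J2" by (cases x) (auto simp: J1_def J2_def)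
    qed (auto simp: J1_def J2_def)
    have "(\<Prod>i\<in>J. emeasure (Mz L i) (A i)) = (\<Prod>i\<in>Inl ` J1. emeasure (Mz L i) (A i)) * (\<Prod>i\<in>Inr ` J2. emeasure (Mz L i) (A i))"
      unfolding JJ using fJ1 fJ2 by (intro prod.union_disjoint) auto
    also have "\<dots> = (\<Prod>k\<in>J1. emeasure (uX L) (A (Inl k))) * (\<Prod>k\<in>J2. emeasure uU (A (Inr k)))"
      by (simp add: prod.reindex Mz_def)
    finally show ?thesis by simp
  qed
  also have "\<dots> = emeasure (PiM UNIV (Mz L)) (prod_emb UNIV (Mz L) J (Pi\<^sub>E J A))"
    using A J pMz by (intro emeasure_PiM_emb[symmetric]) auto
  finally show "emeasure (distr (Q L) (PiM UNIV (Mz L)) (\<lambda>\<omega> i. Zc i \<omega>)) (prod_emb UNIV (Mz L) J (Pi\<^sub>E J A)) =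
      emeasure (PiM UNIV (Mz L)) (prod_emb UNIV (Mz L) J (Pi\<^sub>E J A))" .
qed simp_all

lemma indep_Zc:
  assumes L: "L > 0"
  shows "prob_space.indep_vars (Q L) (Mz L) Zc UNIV"
proof -
  interpret Qp: prob_space "Q L" using prob_Q[OF L] .
  have d: "distr (Q L) (Mz L i) (Zc i) = Mz L i" for i
  proof -
    have "distr (Q L) (Mz L i) (Zc i) = distr (distr (Q L) (PiM UNIV (Mz L)) (\<lambda>\<omega> i. Zc i \<omega>)) (Mz L i) (\<lambda>x. x i)"
      by (subst distr_distr) (auto intro!: Zvec_meas simp: comp_def)
    also have "\<dots> = Mz L i" unfolding iso_Q[OF L]
      using prob_uX[OF L] prob_uU by (intro distr_PiM_component) (auto simp: Mz_def split: sum.split)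
    finally show ?thesis .
  qed
  have r: "(\<lambda>x. \<lambda>i\<in>UNIV. Zc i x) = (\<lambda>x i. Zc i x)" by (simp add: fun_eq_iff)
  show ?thesis
    by (subst Qp.indep_vars_iff_distr_eq_PiM) (auto simp: d iso_Q[OF L] Zc_meas_Mz r)
qed

lemma distr_PX_reindex:
  assumes L: "L > 0" and f: "inj f"
  shows "distr (PX L) (PX L) (\<lambda>x. x \<circ> f) = PX L"
proof -
  have eq: "(\<lambda>x. x \<circ> f) = (\<lambda>\<omega>. \<lambda>n\<in>UNIV. \<omega> (f n))" by (simp add: fun_eq_iff)
  show ?thesis unfolding PX_def eq using f prob_uX[OF L]
    using distr_PiM_reindex[of UNIV "\<lambda>_. uX L" f UNIV] by auto
qed

lemma distr_PU_reindex:
  assumes f: "inj f"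
  shows "distr PU PU (\<lambda>x. x \<circ> f) = PU"
proof -
  have eq: "(\<lambda>x. x \<circ> f) = (\<lambda>\<omega>. \<lambda>n\<in>UNIV. \<omega> (f n))" by (simp add: fun_eq_iff)
  show ?thesis unfolding PU_def eq using f prob_uU
    using distr_PiM_reindex[of UNIV "\<lambda>_. uU" f UNIV] by auto
qed

lemma meas_comp_PX[measurable]: "(\<lambda>x. x \<circ> f) \<in> measurable (PX L) (PX L)"
  unfolding PX_def by (rule measurable_PiM_single') (auto simp: space_PiM)
lemma meas_comp_PU[measurable]: "(\<lambda>x. x \<circ> f) \<in> measurable PU PU"
  unfolding PU_def by (rule measurable_PiM_single') (auto simp: space_PiM)

definition Tr :: "(nat \<Rightarrow> nat) \<Rightarrow> (nat \<times> nat \<Rightarrow> nat \<times> nat) \<Rightarrow> (nat \<Rightarrow> real) \<times> (nat \<times> nat \<Rightarrow> real) \<Rightarrow> (nat \<Rightarrow> real) \<times> (nat \<times> nat \<Rightarrow> real)" where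
  "Tr f g = (\<lambda>(x, u). (x \<circ> f, u \<circ> g))"

lemma Tr_meas: "Tr f g \<in> measurable (Q L) (Q L)"
  unfolding Tr_def Q_def by measurable

lemma distr_Q_Tr:
  assumes L: "L > 0" and f: "inj f" and g: "inj g"
  shows "distr (Q L) (Q L) (Tr f g) = Q L"
proof -
  have "distr (PX L) (PX L) (\<lambda>x. x \<circ> f) \<Otimes>\<^sub>M distr PU PU (\<lambda>x. x \<circ> g) =
        distr (PX L \<Otimes>\<^sub>M PU) (PX L \<Otimes>\<^sub>M PU) (\<lambda>(x, y). (x \<circ> f, y \<circ> g))"
    by (intro pair_measure_distr) (auto simp: distr_PU_reindex[OF g] intro: prob_space_imp_sigma_finite prob_PU)
  then show ?thesis
    by (simp add: distr_PX_reindex[OF L f] distr_PU_reindex[OF g] Q_def Tr_def)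
qed

lemma measure_Tr:
  assumes L: "L > 0" and f: "inj f" and g: "inj g" and E: "E \<in> sets (Q L)"
  shows "measure (Q L) (Tr f g -` E) = measure (Q L) E"
proof -
  have "measure (Q L) E = measure (distr (Q L) (Q L) (Tr f g)) E" by (simp add: distr_Q_Tr[OF L f g])
  also have "\<dots> = measure (Q L) (Tr f g -` E \<inter> space (Q L))"
    using E by (intro measure_distr Tr_meas) auto
  finally show ?thesis by simp
qed

definition recon :: "(nat + nat \<times> nat \<Rightarrow> real) \<Rightarrow> (nat \<Rightarrow> real) \<times> (nat \<times> nat \<Rightarrow> real)" where
  "recon z = (\<lambda>k. z (Inl k), \<lambda>p. z (Inr p))"

lemma recon_meas: "recon \<in> measurable (PiM A (Mz L)) (Q L)"
proof -
  have 1: "(\<lambda>z k. z (Inl k)) \<in> measurable (PiM A (Mz L)) (PX L)"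
    unfolding PX_def
  proof (rule measurable_PiM_single')
    fix k :: nat
    show "(\<lambda>\<omega>. \<omega> (Inl k)) \<in> measurable (PiM A (Mz L)) (uX L)"
    proof (cases "Inl k \<in> A")
      case True
      then have "(\<lambda>\<omega>. \<omega> (Inl k)) \<in> measurable (PiM A (Mz L)) (Mz L (Inl k))" by measurable
      then show ?thesis by (simp add: measurable_def Mz_def)
    next
      case False
      then have "(\<lambda>\<omega>. \<omega> (Inl k)) \<in> measurable (PiM A (Mz L)) (uX L) \<longleftrightarrow> (\<lambda>\<omega>. undefined) \<in> measurable (PiM A (Mz L)) (uX L)"
        by (intro measurable_cong) (auto simp: space_PiM PiE_iff extensional_def)
      then show ?thesis by simp
    qed
  qed (auto simp: space_PiM)
  have 2: "(\<lambda>z p. z (Inr p)) \<in> measurable (PiM A (Mz L)) PU"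
    unfolding PU_def
  proof (rule measurable_PiM_single')
    fix k :: "nat \<times> nat"
    show "(\<lambda>\<omega>. \<omega> (Inr k)) \<in> measurable (PiM A (Mz L)) uU"
    proof (cases "Inr k \<in> A")
      case True
      then have "(\<lambda>\<omega>. \<omega> (Inr k)) \<in> measurable (PiM A (Mz L)) (Mz L (Inr k))" by measurable
      then show ?thesis by (simp add: measurable_def Mz_def)
    next
      case False
      then have "(\<lambda>\<omega>. \<omega> (Inr k)) \<in> measurable (PiM A (Mz L)) uU \<longleftrightarrow> (\<lambda>\<omega>. undefined) \<in> measurable (PiM A (Mz L)) uU"
        by (intro measurable_cong) (auto simp: space_PiM PiE_iff extensional_def)
      then show ?thesis by simp
    qed
  qed (auto simp: space_PiM)
  show ?thesis unfolding recon_def Q_def using 1 2 by measurable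
qed

lemma block_indep:
  assumes L: "L > 0" and AB: "A \<inter> B = {}"
    and E1: "E1 \<in> sets (Q L)" and E2: "E2 \<in> sets (Q L)"
    and loc1: "\<And>\<omega>. recon (restrict (\<lambda>i. Zc i \<omega>) A) \<in> E1 \<longleftrightarrow> \<omega> \<in> E1"
    and loc2: "\<And>\<omega>. recon (restrict (\<lambda>i. Zc i \<omega>) B) \<in> E2 \<longleftrightarrow> \<omega> \<in> E2"
  shows "measure (Q L) (E1 \<inter> E2) = measure (Q L) E1 * measure (Q L) E2"
proof -
  interpret Qp: prob_space "Q L" using prob_Q[OF L] .
  have ind: "Qp.indep_var (PiM A (Mz L)) (\<lambda>\<omega>. restrict (\<lambda>i. Zc i \<omega>) A) (PiM B (Mz L)) (\<lambda>\<omega>. restrict (\<lambda>i. Zc i \<omega>) B)"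
    using AB by (intro Qp.indep_var_restrict[OF indep_Zc[OF L]]) auto
  define S1 where "S1 = recon -` E1 \<inter> space (PiM A (Mz L))"
  define S2 where "S2 = recon -` E2 \<inter> space (PiM B (Mz L))"
  have S1: "S1 \<in> sets (PiM A (Mz L))" unfolding S1_def by (rule measurable_sets[OF recon_meas E1])
  have S2: "S2 \<in> sets (PiM B (Mz L))" unfolding S2_def by (rule measurable_sets[OF recon_meas E2])
  have sp: "restrict (\<lambda>i. Zc i \<omega>) A \<in> space (PiM A (Mz L))" for \<omega> A by (simp add: space_PiM)
  have e1: "(\<lambda>\<omega>. restrict (\<lambda>i. Zc i \<omega>) A) -` S1 = E1"
    using sp by (simp add: S1_def loc1 set_eq_iff)
  have e2: "(\<lambda>\<omega>. restrict (\<lambda>i. Zc i \<omega>) B) -` S2 = E2"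
    using sp by (simp add: S2_def loc2 set_eq_iff)
  have e12: "(\<lambda>\<omega>. (restrict (\<lambda>i. Zc i \<omega>) A, restrict (\<lambda>i. Zc i \<omega>) B)) -` (S1 \<times> S2) = E1 \<inter> E2"
    using e1 e2 by auto
  show ?thesis using Qp.indep_varD[OF ind S1 S2] by (simp add: e1 e2 e12)
qed

definition sig :: "(nat \<Rightarrow> nat) \<Rightarrow> nat \<times> nat \<Rightarrow> nat \<times> nat" where
  "sig \<pi> p = (case p of (a, b) \<Rightarrow>
     if a < b then (min (\<pi> a) (\<pi> b), max (\<pi> a) (\<pi> b))
     else if b < a then (max (\<pi> a) (\<pi> b), min (\<pi> a) (\<pi> b)) else (\<pi> a, \<pi> b))"

lemma sig_cases: "sig \<pi> (a, b) = (\<pi> a, \<pi> b) \<or> sig \<pi> (a, b) = (\<pi> b, \<pi> a)"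
  by (auto simp: sig_def min_def max_def)

lemma sig_order:
  assumes "inj \<pi>"
  shows "fst (sig \<pi> (a, b)) < snd (sig \<pi> (a, b)) \<longleftrightarrow> a < b"
    and "fst (sig \<pi> (a, b)) = snd (sig \<pi> (a, b)) \<longleftrightarrow> a = b"
proof -
  have i: "\<pi> x = \<pi> y \<longleftrightarrow> x = y" for x y using assms by (auto simp: inj_def)
  show "fst (sig \<pi> (a, b)) < snd (sig \<pi> (a, b)) \<longleftrightarrow> a < b"
    using i[of a b] by (auto simp: sig_def min_def max_def)
  show "fst (sig \<pi> (a, b)) = snd (sig \<pi> (a, b)) \<longleftrightarrow> a = b"
    using i[of a b] by (auto simp: sig_def min_def max_def)
qed

lemma inj_sig: assumes "inj \<pi>" shows "inj (sig \<pi>)"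
proof (rule injI)
  fix p q assume eq: "sig \<pi> p = sig \<pi> q"
  obtain a b c d where pq: "p = (a, b)" "q = (c, d)" by (cases p, cases q) auto
  have i: "\<pi> x = \<pi> y \<longleftrightarrow> x = y" for x y using assms by (auto simp: inj_def)
  have e: "sig \<pi> (a, b) = sig \<pi> (c, d)" using eq pq by simp
  have o1: "a < b \<longleftrightarrow> c < d" using sig_order(1)[OF assms, of a b] sig_order(1)[OF assms, of c d] e by simp
  have o2: "a = b \<longleftrightarrow> c = d" using sig_order(2)[OF assms, of a b] sig_order(2)[OF assms, of c d] e by simp
  have "(\<pi> a, \<pi> b) = (\<pi> c, \<pi> d) \<or> (\<pi> a, \<pi> b) = (\<pi> d, \<pi> c)"
    using sig_cases[of \<pi> a b] sig_cases[of \<pi> c d] e o2 by auto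
  then have "(a = c \<and> b = d) \<or> (a = d \<and> b = c)" using i by auto
  then show "p = q" using o1 o2 pq by auto
qed

lemma sig_min_max: "k \<noteq> l \<Longrightarrow> sig \<pi> (min k l, max k l) = (min (\<pi> k) (\<pi> l), max (\<pi> k) (\<pi> l))"
  by (auto simp: sig_def min_def max_def)

lemma exists_perm:
  assumes s: "s \<subseteq> {..<n}" and r: "card s = r"
  shows "\<exists>\<pi>. inj \<pi> \<and> \<pi> ` {..<n} = {..<n} \<and> \<pi> ` {..<r} = s"
proof -
  have fs: "finite s" using s finite_subset by blast
  have rn: "r \<le> n" using card_mono[OF _ s] r by auto
  obtain h1 where h1: "bij_betw h1 {..<r} s" using finite_same_card_bij[of "{..<r}" s] fs r by auto
  obtain h2 where h2: "bij_betw h2 {r..<n} ({..<n} - s)"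
    using finite_same_card_bij[of "{r..<n}" "{..<n} - s"] fs s r by (auto simp: card_Diff_subset)
  define \<pi> where "\<pi> k = (if k < r then h1 k else if k < n then h2 k else k)" for k
  have e1: "k \<in> {..<r} \<Longrightarrow> \<pi> k = h1 k" for k by (simp add: \<pi>_def)
  have e2: "k \<in> {r..<n} \<Longrightarrow> \<pi> k = h2 k" for k by (simp add: \<pi>_def)
  have im1: "\<pi> ` {..<r} = s"
  proof -
    have "\<pi> ` {..<r} = h1 ` {..<r}" by (rule image_cong) (auto simp: \<pi>_def)
    then show ?thesis using h1 by (simp add: bij_betw_def)
  qed
  have im2: "\<pi> ` {r..<n} = {..<n} - s"
  proof -
    have "\<pi> ` {r..<n} = h2 ` {r..<n}" by (rule image_cong) (auto simp: \<pi>_def)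
    then show ?thesis using h2 by (simp add: bij_betw_def)
  qed
  have un: "{..<n} = {..<r} \<union> {r..<n}" using rn by auto
  have imn: "\<pi> ` {..<n} = {..<n}"
  proof -
    have "\<pi> ` {..<n} = \<pi> ` {..<r} \<union> \<pi> ` {r..<n}" using un by (metis image_Un)
    also have "\<dots> = {..<n}" using im1 im2 s by blast
    finally show ?thesis .
  qed
  have i1: "inj_on \<pi> {..<r}"
  proof -
    have "inj_on \<pi> {..<r} = inj_on h1 {..<r}" by (rule inj_on_cong) (auto simp: \<pi>_def)
    then show ?thesis using h1 by (simp add: bij_betw_def)
  qed
  have i2: "inj_on \<pi> {r..<n}"
  proof -
    have "inj_on \<pi> {r..<n} = inj_on h2 {r..<n}" by (rule inj_on_cong) (auto simp: \<pi>_def)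
    then show ?thesis using h2 by (simp add: bij_betw_def)
  qed
  have injn: "inj_on \<pi> {..<n}"
  proof -
    have "\<pi> ` ({..<r} - {r..<n}) \<inter> \<pi> ` ({r..<n} - {..<r}) = {}"
      using im1 im2 by auto
    then have "inj_on \<pi> ({..<r} \<union> {r..<n})" using i1 i2 inj_on_Un by blast
    then show ?thesis using un by simp
  qed
  have out: "k \<ge> n \<Longrightarrow> \<pi> k = k" for k using rn by (auto simp: \<pi>_def)
  have inb: "x < n \<Longrightarrow> \<pi> x < n" for x using imn by auto
  have "inj \<pi>"
  proof (rule injI)
    fix x y assume xy: "\<pi> x = \<pi> y"
    show "x = y"
    proof (cases "x < n"; cases "y < n")
      assume "x < n" "y < n" then show ?thesis using injn xy by (auto simp: inj_on_def)
    next
      assume "x < n" "\<not> y < n" then show ?thesis using inb[of x] out[of y] xy by simp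
    next
      assume "\<not> x < n" "y < n" then show ?thesis using inb[of y] out[of x] xy by simp
    next
      assume "\<not> x < n" "\<not> y < n" then show ?thesis using out xy by simp
    qed
  qed
  then show ?thesis using imn im1 by blast
qed

lemma sum_Pow_card:
  fixes f :: "nat \<Rightarrow> real"
  assumes "finite A"
  shows "(\<Sum>s\<in>Pow A. f (card s)) = (\<Sum>r\<le>card A. real (card A choose r) * f r)"
proof -
  have "(\<Sum>s\<in>Pow A. f (card s)) = (\<Sum>r\<le>card A. \<Sum>s\<in>{s. s \<in> Pow A \<and> card s = r}. f (card s))"
    using assms by (intro sum.group[symmetric]) (auto intro: card_mono)
  also have "\<dots> = (\<Sum>r\<le>card A. real (card A choose r) * f r)"
  proof (intro sum.cong refl)
    fix r
    have "(\<Sum>s\<in>{s. s \<in> Pow A \<and> card s = r}. f (card s)) = (\<Sum>s\<in>{s. s \<in> Pow A \<and> card s = r}. f r)" by simp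
    also have "\<dots> = real (card {s. s \<subseteq> A \<and> card s = r}) * f r" by simp
    also have "card {s. s \<subseteq> A \<and> card s = r} = card A choose r" using n_subsets[OF assms] .
    finally show "(\<Sum>s\<in>{s. s \<in> Pow A \<and> card s = r}. f (card s)) = real (card A choose r) * f r" .
  qed
  finally show ?thesis .
qed

definition good :: "nat \<Rightarrow> (nat \<Rightarrow> real) \<Rightarrow> (nat \<times> nat \<Rightarrow> real) \<Rightarrow> bool" where
  "good L x u \<longleftrightarrow> (\<forall>k. 0 \<le> x k \<and> x k < real L) \<and> (\<forall>p. 0 \<le> u p \<and> u p \<le> 1)"

lemma AE_good:
  assumes L: "L > 0"
  shows "AE \<omega> in Q L. good L (fst \<omega>) (snd \<omega>)"
proof -
  have ax: "AE x in PX L. \<forall>k. 0 \<le> x k \<and> x k < real L"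
  proof (subst AE_all_countable, intro allI)
    fix k
    have "AE y in uX L. 0 \<le> y \<and> y < real L" unfolding uX_def
      using L by (subst AE_uniform_measure) auto
    then show "AE x in PX L. 0 \<le> x k \<and> x k < real L"
      unfolding PX_def using prob_uX[OF L] by (intro AE_PiM_component) auto
  qed
  have au: "AE u in PU. \<forall>p. 0 \<le> u p \<and> u p \<le> 1"
  proof (subst AE_all_countable, intro allI)
    fix p
    have "AE y in uU. 0 \<le> y \<and> y \<le> 1" unfolding uU_def
      by (subst AE_uniform_measure) auto
    then show "AE u in PU. 0 \<le> u p \<and> u p \<le> 1"
      unfolding PU_def using prob_uU by (intro AE_PiM_component) auto
  qed
  interpret PX: prob_space "PX L" using prob_PX[OF L] .
  interpret PU: prob_space PU using prob_PU .
  interpret pair_sigma_finite "PX L" PU by unfold_locales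
  have m: "{\<omega> \<in> space (PX L \<Otimes>\<^sub>M PU). good L (fst \<omega>) (snd \<omega>)} \<in> sets (PX L \<Otimes>\<^sub>M PU)"
    unfolding good_def PX_def PU_def by measurable
  show ?thesis unfolding Q_def
    by (rule AE_pair_measure[OF m]) (use ax au in \<open>auto simp: good_def elim!: AE_mp\<close>)
qed

lemma fst_Q_meas[measurable]: "(\<lambda>\<omega>. fst \<omega> k) \<in> borel_measurable (Q L)"
  unfolding Q_def PX_def by measurable

locale core =
  fixes L :: nat and R :: "real set"
    and \<Phi> \<Psi> :: "nat \<Rightarrow> (nat \<Rightarrow> real) \<Rightarrow> (nat \<times> nat \<Rightarrow> real) \<Rightarrow> bool"
  assumes L: "L > 0"
    and R[measurable]: "R \<in> sets borel"
    and meas\<Phi>: "\<And>n. {\<omega>. \<Phi> n (fst \<omega>) (snd \<omega>)} \<in> sets (Q L)"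
    and meas\<Psi>: "\<And>n. {\<omega>. \<Psi> n (fst \<omega>) (snd \<omega>)} \<in> sets (Q L)"
    and dep\<Phi>: "\<And>n x x' u u'. (\<And>k. k < n \<Longrightarrow> x k = x' k) \<Longrightarrow> (\<And>a b. a < n \<Longrightarrow> b < n \<Longrightarrow> u (a, b) = u' (a, b))
                 \<Longrightarrow> \<Phi> n x u = \<Phi> n x' u'"
    and dep\<Psi>: "\<And>n x x' u u'. (\<And>k. k < n \<Longrightarrow> x k = x' k) \<Longrightarrow> (\<And>a b. a < n \<Longrightarrow> b < n \<Longrightarrow> u (a, b) = u' (a, b))
                 \<Longrightarrow> \<Psi> n x u = \<Psi> n x' u'"
    and sym\<Phi>: "\<And>n \<pi> x u. inj \<pi> \<Longrightarrow> \<pi> ` {..<n} = {..<n} \<Longrightarrow> \<Phi> n (x \<circ> \<pi>) (u \<circ> sig \<pi>) = \<Phi> n x u"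
    and sym\<Psi>: "\<And>n \<pi> x u. inj \<pi> \<Longrightarrow> \<pi> ` {..<n} = {..<n} \<Longrightarrow> \<Psi> n (x \<circ> \<pi>) (u \<circ> sig \<pi>) = \<Psi> n x u"
    and loc\<Phi>: "\<And>n r x u. good L x u \<Longrightarrow> r \<le> n \<Longrightarrow> (\<And>k. k < n \<Longrightarrow> (x k \<in> R \<longleftrightarrow> k < r)) \<Longrightarrow> \<Phi> n x u = \<Phi> r x u"
    and loc\<Psi>: "\<And>n r x u. good L x u \<Longrightarrow> r \<le> n \<Longrightarrow> (\<And>k. k < n \<Longrightarrow> (x k \<in> R \<longleftrightarrow> k < r)) \<Longrightarrow>
                 \<Psi> n x u = \<Psi> (n - r) (x \<circ> (\<lambda>k. k + r)) (u \<circ> (\<lambda>(a, b). (a + r, b + r)))"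
begin

definition inS :: "nat \<Rightarrow> nat set \<Rightarrow> ((nat \<Rightarrow> real) \<times> (nat \<times> nat \<Rightarrow> real)) set" where
  "inS n s = {\<omega>. \<forall>k<n. fst \<omega> k \<in> R \<longleftrightarrow> k \<in> s}"
definition EE :: "nat \<Rightarrow> ((nat \<Rightarrow> real) \<times> (nat \<times> nat \<Rightarrow> real)) set" where
  "EE n = {\<omega>. \<Phi> n (fst \<omega>) (snd \<omega>) \<and> \<Psi> n (fst \<omega>) (snd \<omega>)}"
definition \<alpha> :: "nat \<Rightarrow> real" where
  "\<alpha> r = measure (Q L) {\<omega>. (\<forall>k<r. fst \<omega> k \<in> R) \<and> \<Phi> r (fst \<omega>) (snd \<omega>)}"
definition \<beta> :: "nat \<Rightarrow> real" where
  "\<beta> q = measure (Q L) {\<omega>. (\<forall>k<q. fst \<omega> k \<notin> R) \<and> \<Psi> q (fst \<omega>) (snd \<omega>)}"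

lemma inS_meas: "inS n s \<in> sets (Q L)"
proof -
  have "inS n s = {\<omega> \<in> space (Q L). \<forall>k<n. fst \<omega> k \<in> R \<longleftrightarrow> k \<in> s}" by (simp add: inS_def)
  also have "\<dots> \<in> sets (Q L)" by measurable
  finally show ?thesis .
qed

lemma EE_meas: "EE n \<in> sets (Q L)"
proof -
  have "EE n = {\<omega>. \<Phi> n (fst \<omega>) (snd \<omega>)} \<inter> {\<omega>. \<Psi> n (fst \<omega>) (snd \<omega>)}" by (auto simp: EE_def)
  then show ?thesis using meas\<Phi> meas\<Psi> by auto
qed

lemma step_perm:
  assumes s: "s \<subseteq> {..<n}" and r: "card s = r"
  shows "measure (Q L) (EE n \<inter> inS n s) = measure (Q L) (EE n \<inter> inS n {..<r})"
proof -
  obtain \<pi> where \<pi>: "inj \<pi>" "\<pi> ` {..<n} = {..<n}" "\<pi> ` {..<r} = s" using exists_perm[OF s r] by blast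
  have key: "(\<forall>k<n. x (\<pi> k) \<in> R \<longleftrightarrow> k < r) \<longleftrightarrow> (\<forall>j<n. x j \<in> R \<longleftrightarrow> j \<in> s)" for x
  proof -
    have kr: "k < n \<Longrightarrow> (k < r \<longleftrightarrow> \<pi> k \<in> s)" for k
    proof
      assume "k < r" then show "\<pi> k \<in> s" using \<pi>(3) by auto
    next
      assume "\<pi> k \<in> s"
      then obtain k' where "k' < r" "\<pi> k' = \<pi> k" using \<pi>(3) by auto
      then show "k < r" using \<pi>(1) by (auto simp: inj_def)
    qed
    have "(\<forall>k<n. x (\<pi> k) \<in> R \<longleftrightarrow> k < r) \<longleftrightarrow> (\<forall>k<n. x (\<pi> k) \<in> R \<longleftrightarrow> \<pi> k \<in> s)" using kr by auto
    also have "\<dots> \<longleftrightarrow> (\<forall>j\<in>\<pi> ` {..<n}. x j \<in> R \<longleftrightarrow> j \<in> s)" by auto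
    also have "\<dots> \<longleftrightarrow> (\<forall>j<n. x j \<in> R \<longleftrightarrow> j \<in> s)" using \<pi>(2) by auto
    finally show ?thesis .
  qed
  have pre: "Tr \<pi> (sig \<pi>) -` (EE n \<inter> inS n {..<r}) = EE n \<inter> inS n s"
  proof (intro set_eqI)
    fix \<omega> :: "(nat \<Rightarrow> real) \<times> (nat \<times> nat \<Rightarrow> real)"
    obtain x u where \<omega>: "\<omega> = (x, u)" by (cases \<omega>)
    show "\<omega> \<in> Tr \<pi> (sig \<pi>) -` (EE n \<inter> inS n {..<r}) \<longleftrightarrow> \<omega> \<in> EE n \<inter> inS n s"
      unfolding \<omega> using key[of x]
      by (simp add: Tr_def EE_def inS_def sym\<Phi>[OF \<pi>(1,2)] sym\<Psi>[OF \<pi>(1,2)])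
  qed
  have "measure (Q L) (Tr \<pi> (sig \<pi>) -` (EE n \<inter> inS n {..<r})) = measure (Q L) (EE n \<inter> inS n {..<r})"
    using EE_meas inS_meas by (intro measure_Tr L \<pi>(1) inj_sig) auto
  then show ?thesis using pre by simp
qed

lemma step_split:
  assumes rn: "r \<le> n"
  shows "measure (Q L) (EE n \<inter> inS n {..<r}) = \<alpha> r * \<beta> (n - r)"
proof -
  define sh :: "nat \<Rightarrow> nat" where "sh = (\<lambda>k. k + r)"
  define shp :: "nat \<times> nat \<Rightarrow> nat \<times> nat" where "shp = (\<lambda>(a, b). (a + r, b + r))"
  define E1 where "E1 = {\<omega>. (\<forall>k<r. fst \<omega> k \<in> R) \<and> \<Phi> r (fst \<omega>) (snd \<omega>)}"
  define E2'' where "E2'' = {\<omega>. (\<forall>k<n - r. fst \<omega> k \<notin> R) \<and> \<Psi> (n - r) (fst \<omega>) (snd \<omega>)}"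
  define E2 where "E2 = Tr sh shp -` E2''"
  have E1m: "E1 \<in> sets (Q L)"
  proof -
    have "E1 = {\<omega> \<in> space (Q L). \<forall>k<r. fst \<omega> k \<in> R} \<inter> {\<omega>. \<Phi> r (fst \<omega>) (snd \<omega>)}" by (auto simp: E1_def)
    also have "\<dots> \<in> sets (Q L)" using meas\<Phi> by (intro sets.Int) measurable
    finally show ?thesis .
  qed
  have E2''m: "E2'' \<in> sets (Q L)"
  proof -
    have "E2'' = {\<omega> \<in> space (Q L). \<forall>k<n - r. fst \<omega> k \<notin> R} \<inter> {\<omega>. \<Psi> (n - r) (fst \<omega>) (snd \<omega>)}" by (auto simp: E2''_def)
    also have "\<dots> \<in> sets (Q L)" using meas\<Psi> by (intro sets.Int) measurable
    finally show ?thesis .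
  qed
  have E2m: "E2 \<in> sets (Q L)"
    using measurable_sets[OF Tr_meas E2''m] by (simp add: E2_def)
  have inj_sh: "inj sh" by (simp add: sh_def inj_def)
  have inj_shp: "inj shp" by (auto simp: shp_def inj_def)
  have mE2: "measure (Q L) E2 = \<beta> (n - r)"
    unfolding E2_def \<beta>_def using measure_Tr[OF L inj_sh inj_shp E2''m] by (simp add: E2''_def)
  have E2_alt: "E2 = {\<omega>. (\<forall>k. r \<le> k \<and> k < n \<longrightarrow> fst \<omega> k \<notin> R) \<and>
                         \<Psi> (n - r) (fst \<omega> \<circ> sh) (snd \<omega> \<circ> shp)}"
  proof -
    have "(\<forall>k<n - r. x (k + r) \<notin> R) \<longleftrightarrow> (\<forall>k. r \<le> k \<and> k < n \<longrightarrow> x k \<notin> R)" for x :: "nat \<Rightarrow> real"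
    proof
      assume a: "\<forall>k<n - r. x (k + r) \<notin> R"
      show "\<forall>k. r \<le> k \<and> k < n \<longrightarrow> x k \<notin> R"
      proof (intro allI impI)
        fix k assume "r \<le> k \<and> k < n"
        then have "k - r < n - r" "k - r + r = k" by (simp_all add: diff_less_mono)
        then show "x k \<notin> R" using a[rule_format, of "k - r"] by simp
      qed
    qed auto
    then show ?thesis by (auto simp: E2_def E2''_def Tr_def sh_def)
  qed
  have ae: "AE \<omega> in Q L. \<omega> \<in> EE n \<inter> inS n {..<r} \<longleftrightarrow> \<omega> \<in> E1 \<inter> E2"
    using AE_good[OF L]
  proof (rule AE_mp, intro AE_I2 impI)
    fix \<omega> :: "(nat \<Rightarrow> real) \<times> (nat \<times> nat \<Rightarrow> real)"
    assume g: "good L (fst \<omega>) (snd \<omega>)"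
    have split: "(\<forall>k<n. fst \<omega> k \<in> R \<longleftrightarrow> k \<in> {..<r}) \<longleftrightarrow>
        (\<forall>k<r. fst \<omega> k \<in> R) \<and> (\<forall>k. r \<le> k \<and> k < n \<longrightarrow> fst \<omega> k \<notin> R)"
      using rn by (auto simp: not_less)
    show "\<omega> \<in> EE n \<inter> inS n {..<r} \<longleftrightarrow> \<omega> \<in> E1 \<inter> E2"
    proof
      assume a: "\<omega> \<in> EE n \<inter> inS n {..<r}"
      then have c: "\<And>k. k < n \<Longrightarrow> fst \<omega> k \<in> R \<longleftrightarrow> k < r" by (auto simp: inS_def)
      show "\<omega> \<in> E1 \<inter> E2" using a split loc\<Phi>[OF g rn c] loc\<Psi>[OF g rn c]
        by (auto simp: EE_def inS_def E1_def E2_alt sh_def shp_def)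
    next
      assume a: "\<omega> \<in> E1 \<inter> E2"
      then have c: "\<And>k. k < n \<Longrightarrow> fst \<omega> k \<in> R \<longleftrightarrow> k < r" 
        using rn by (auto simp: E1_def E2_alt) (meson not_less)
      show "\<omega> \<in> EE n \<inter> inS n {..<r}" using a loc\<Phi>[OF g rn c] loc\<Psi>[OF g rn c] c
        by (auto simp: EE_def inS_def E1_def E2_alt sh_def shp_def)
    qed
  qed
  have "measure (Q L) (EE n \<inter> inS n {..<r}) = measure (Q L) (E1 \<inter> E2)"
    using ae EE_meas inS_meas E1m E2m by (intro measure_eq_AE) auto
  also have "\<dots> = measure (Q L) E1 * measure (Q L) E2"
  proof (rule block_indep[OF L _ E1m E2m])
    define A where "A = Inl ` {..<r} \<union> Inr ` ({..<r} \<times> {..<r})"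
    define B where "B = Inl ` {r..<n} \<union> Inr ` ({r..<n} \<times> {r..<n})"
    show "A \<inter> B = {}" by (auto simp: A_def B_def)
    fix \<omega> :: "(nat \<Rightarrow> real) \<times> (nat \<times> nat \<Rightarrow> real)"
    obtain x u where \<omega>: "\<omega> = (x, u)" by (cases \<omega>)
    have rA: "recon (restrict (\<lambda>i. Zc i \<omega>) A) =
       (\<lambda>k. if k < r then x k else undefined, \<lambda>p. if fst p < r \<and> snd p < r then u p else undefined)"
      by (auto simp: recon_def A_def Zc_def \<omega> fun_eq_iff image_iff mem_Times_iff)
    have rB: "recon (restrict (\<lambda>i. Zc i \<omega>) B) =
       (\<lambda>k. if r \<le> k \<and> k < n then x k else undefined,
        \<lambda>p. if r \<le> fst p \<and> fst p < n \<and> r \<le> snd p \<and> snd p < n then u p else undefined)"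
      by (auto simp: recon_def B_def Zc_def \<omega> fun_eq_iff image_iff mem_Times_iff)
    have d1: "\<Phi> r (\<lambda>k. if k < r then x k else undefined) (\<lambda>p. if fst p < r \<and> snd p < r then u p else undefined)
        = \<Phi> r x u" by (rule dep\<Phi>) auto
    show "recon (restrict (\<lambda>i. Zc i \<omega>) A) \<in> E1 \<longleftrightarrow> \<omega> \<in> E1"
      unfolding rA using d1 by (auto simp: E1_def \<omega>)
    have d2: "\<Psi> (n - r) ((\<lambda>k. if r \<le> k \<and> k < n then x k else undefined) \<circ> sh)
        ((\<lambda>p. if r \<le> fst p \<and> fst p < n \<and> r \<le> snd p \<and> snd p < n then u p else undefined) \<circ> shp)
        = \<Psi> (n - r) (x \<circ> sh) (u \<circ> shp)" by (rule dep\<Psi>) (auto simp: sh_def shp_def)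
    show "recon (restrict (\<lambda>i. Zc i \<omega>) B) \<in> E2 \<longleftrightarrow> \<omega> \<in> E2"
      unfolding rB E2_alt using d2 by (auto simp: \<omega>)
  qed
  also have "measure (Q L) E1 = \<alpha> r" by (simp add: E1_def \<alpha>_def)
  finally show ?thesis using mE2 by simp
qed

lemma fixed_n:
  "measure (Q L) (EE n) = (\<Sum>r\<le>n. real (n choose r) * (\<alpha> r * \<beta> (n - r)))"
proof -
  have un: "EE n = (\<Union>s\<in>Pow {..<n}. EE n \<inter> inS n s)"
  proof (intro set_eqI iffI)
    fix \<omega> assume "\<omega> \<in> EE n"
    then show "\<omega> \<in> (\<Union>s\<in>Pow {..<n}. EE n \<inter> inS n s)"
      by (intro UN_I[of "{k. k < n \<and> fst \<omega> k \<in> R}"]) (auto simp: inS_def)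
  qed auto
  have disj: "disjoint_family_on (\<lambda>s. EE n \<inter> inS n s) (Pow {..<n})"
    unfolding disjoint_family_on_def inS_def by auto
  interpret Qp: prob_space "Q L" using prob_Q[OF L] .
  have "measure (Q L) (EE n) = (\<Sum>s\<in>Pow {..<n}. measure (Q L) (EE n \<inter> inS n s))"
    by (subst un, rule measure_finite_Union) (use disj EE_meas inS_meas in auto)
  also have "\<dots> = (\<Sum>s\<in>Pow {..<n}. \<alpha> (card s) * \<beta> (n - card s))"
  proof (rule sum.cong[OF refl])
    fix s assume s: "s \<in> Pow {..<n}"
    then have "card s \<le> n" using card_mono[of "{..<n}" s] by auto
    then show "measure (Q L) (EE n \<inter> inS n s) = \<alpha> (card s) * \<beta> (n - card s)"
      using step_perm[of s n "card s"] step_split[of "card s" n] s by auto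
  qed
  also have "\<dots> = (\<Sum>r\<le>n. real (n choose r) * (\<alpha> r * \<beta> (n - r)))"
    using sum_Pow_card[of "{..<n}" "\<lambda>r. \<alpha> r * \<beta> (n - r)"] by simp
  finally show ?thesis .
qed

end

lemma summable_Lfact: "summable (\<lambda>n. (x::real) ^ n / fact n)"
  using summable_exp[of x] by (simp add: field_simps divide_inverse [symmetric])

lemma M_formula:
  fixes P :: "nat \<Rightarrow> (nat \<Rightarrow> real) \<Rightarrow> (nat \<times> nat \<Rightarrow> real) \<Rightarrow> bool"
  assumes L: "L > 0" and meas: "\<And>n. {\<omega>. P n (fst \<omega>) (snd \<omega>)} \<in> sets (Q L)"
  shows "{\<omega> \<in> space (PPP_space L). P (fst \<omega>) (fst (snd \<omega>)) (snd (snd \<omega>))} \<in> sets (PPP_space L)"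
    and "measure (PPP_space L) {\<omega> \<in> space (PPP_space L). P (fst \<omega>) (fst (snd \<omega>)) (snd (snd \<omega>))} =
         (\<Sum>n. real L ^ n / fact n * exp (- real L) * measure (Q L) {\<omega>. P n (fst \<omega>) (snd \<omega>)})"
proof -
  let ?p = "poisson_pmf (real L)"
  define S where "S n = {\<omega>. P n (fst \<omega>) (snd \<omega>)}" for n
  define E where "E = {\<omega> \<in> space (PPP_space L). P (fst \<omega>) (fst (snd \<omega>)) (snd (snd \<omega>))}"
  have Eeq: "E = (\<Union>n. {n} \<times> S n)"
    by (auto simp: E_def S_def PPP_Q space_pair_measure)
  have Em: "E \<in> sets (PPP_space L)"
    unfolding Eeq PPP_Q using meas unfolding S_def
    by (intro sets.countable_UN pair_measureI) auto
  then show "{\<omega> \<in> space (PPP_space L). P (fst \<omega>) (fst (snd \<omega>)) (snd (snd \<omega>))} \<in> sets (PPP_space L)"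
    by (simp add: E_def)
  interpret Qp: prob_space "Q L" using prob_Q[OF L] .
  have pois: "pmf ?p n = real L ^ n / fact n * exp (- real L)" for n
    using L by (simp add: pmf_poisson)
  have summ: "summable (\<lambda>n. real L ^ n / fact n * exp (- real L) * measure (Q L) (S n))"
    proof (rule summable_comparison_test'[where N=0])
      show "summable (\<lambda>n. real L ^ n / fact n * exp (- real L))"
        by (rule summable_mult2[OF summable_Lfact])
    next
      fix n :: nat
      have c: "0 \<le> real L ^ n / fact n * exp (- real L)" by simp
      have "norm (real L ^ n / fact n * exp (- real L) * measure (Q L) (S n)) =
            real L ^ n / fact n * exp (- real L) * measure (Q L) (S n)" by (simp add: abs_mult)
      also have "\<dots> \<le> real L ^ n / fact n * exp (- real L)" using c by (intro mult_left_le) auto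
      finally show "norm (real L ^ n / fact n * exp (- real L) * measure (Q L) (S n)) \<le> real L ^ n / fact n * exp (- real L)" .
    qed
  have "emeasure (PPP_space L) E = (\<integral>\<^sup>+ n. emeasure (Q L) (Pair n -` E) \<partial>measure_pmf ?p)"
    using Em unfolding PPP_Q by (rule Qp.emeasure_pair_measure_alt)
  also have "\<dots> = (\<integral>\<^sup>+ n. ennreal (pmf ?p n) * emeasure (Q L) (S n) \<partial>count_space UNIV)"
  proof -
    have "Pair n -` E = S n" for n by (auto simp: Eeq)
    then show ?thesis by (simp add: nn_integral_measure_pmf)
  qed
  also have "\<dots> = (\<Sum>n. ennreal (pmf ?p n) * emeasure (Q L) (S n))"
    by (simp add: nn_integral_count_space_nat)
  also have "\<dots> = (\<Sum>n. ennreal (real L ^ n / fact n * exp (- real L) * measure (Q L) (S n)))"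
    by (simp add: pois Qp.emeasure_eq_measure ennreal_mult'[symmetric])
  also have "\<dots> = ennreal (\<Sum>n. real L ^ n / fact n * exp (- real L) * measure (Q L) (S n))"
    by (rule suminf_ennreal2) (simp, rule summ)
  finally show "measure (PPP_space L) {\<omega> \<in> space (PPP_space L). P (fst \<omega>) (fst (snd \<omega>)) (snd (snd \<omega>))} =
         (\<Sum>n. real L ^ n / fact n * exp (- real L) * measure (Q L) {\<omega>. P n (fst \<omega>) (snd \<omega>)})"
    unfolding E_def[symmetric] S_def[symmetric] using suminf_nonneg[OF summ]
    by (simp add: measure_def)
qed

lemma UNIV_Q: "UNIV \<in> sets (Q L)" using sets.top[of "Q L"] by simp

context core
begin

lemma \<alpha>_bounds: "0 \<le> \<alpha> r" "\<alpha> r \<le> 1"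
proof -
  interpret Qp: prob_space "Q L" using prob_Q[OF L] .
  show "0 \<le> \<alpha> r" "\<alpha> r \<le> 1" by (simp_all add: \<alpha>_def)
qed

lemma \<beta>_bounds: "0 \<le> \<beta> r" "\<beta> r \<le> 1"
proof -
  interpret Qp: prob_space "Q L" using prob_Q[OF L] .
  show "0 \<le> \<beta> r" "\<beta> r \<le> 1" by (simp_all add: \<beta>_def)
qed

lemma summable_w:
  assumes "\<And>r. 0 \<le> w r" "\<And>r. w r \<le> 1"
  shows "summable (\<lambda>r. norm (real L ^ r / fact r * w r))"
proof (rule summable_comparison_test'[where N=0])
  show "summable (\<lambda>r. real L ^ r / fact r)" by (rule summable_Lfact)
next
  fix n :: nat
  have c: "0 \<le> real L ^ n / fact n" by simp
  have "norm (norm (real L ^ n / fact n * w n)) = real L ^ n / fact n * w n" using assms(1)[of n] by (simp add: abs_mult)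
  also have "\<dots> \<le> real L ^ n / fact n" using c assms(2)[of n] by (intro mult_left_le) auto
  finally show "norm (norm (real L ^ n / fact n * w n)) \<le> real L ^ n / fact n" .
qed

lemma formula:
  "measure (PPP_space L) {\<omega> \<in> space (PPP_space L). \<Phi> (fst \<omega>) (fst (snd \<omega>)) (snd (snd \<omega>)) \<and> \<Psi> (fst \<omega>) (fst (snd \<omega>)) (snd (snd \<omega>))}
   = exp (- real L) * ((\<Sum>r. real L ^ r / fact r * \<alpha> r) * (\<Sum>q. real L ^ q / fact q * \<beta> q))"
proof -
  define a where "a r = real L ^ r / fact r * \<alpha> r" for r
  define b where "b r = real L ^ r / fact r * \<beta> r" for r
  have m: "{\<omega>. \<Phi> n (fst \<omega>) (snd \<omega>) \<and> \<Psi> n (fst \<omega>) (snd \<omega>)} \<in> sets (Q L)" for n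
    using EE_meas[of n] by (simp add: EE_def)
  have eqn: "real L ^ n / fact n * exp (- real L) * measure (Q L) {\<omega>. \<Phi> n (fst \<omega>) (snd \<omega>) \<and> \<Psi> n (fst \<omega>) (snd \<omega>)}
      = exp (- real L) * (\<Sum>i\<le>n. a i * b (n - i))" for n
  proof -
    have "measure (Q L) {\<omega>. \<Phi> n (fst \<omega>) (snd \<omega>) \<and> \<Psi> n (fst \<omega>) (snd \<omega>)} = (\<Sum>r\<le>n. real (n choose r) * (\<alpha> r * \<beta> (n - r)))"
      using fixed_n[of n] by (simp add: EE_def)
    moreover have pr: "real L ^ n / fact n * (real (n choose r) * (\<alpha> r * \<beta> (n - r))) = a r * b (n - r)" if "r \<le> n" for r
    proof -
      have "real L ^ n = real L ^ r * real L ^ (n - r)" using that by (simp add: power_add[symmetric])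
      moreover have "real (n choose r) = fact n / (fact r * fact (n - r))" using binomial_fact[OF that] by simp
      ultimately show ?thesis by (simp add: a_def b_def field_simps)
    qed
    have "(\<Sum>r\<le>n. real L ^ n / fact n * (real (n choose r) * (\<alpha> r * \<beta> (n - r)))) = (\<Sum>r\<le>n. a r * b (n - r))"
      by (rule sum.cong[OF refl]) (rule pr, simp)
    moreover have "real L ^ n / fact n * exp (- real L) * (\<Sum>r\<le>n. real (n choose r) * (\<alpha> r * \<beta> (n - r)))
        = exp (- real L) * (\<Sum>r\<le>n. real L ^ n / fact n * (real (n choose r) * (\<alpha> r * \<beta> (n - r))))"
      by (simp only: sum_distrib_left[symmetric]) (simp add: mult_ac)
    ultimately show ?thesis by simp
  qed
  have cs: "(\<lambda>k. \<Sum>i\<le>k. a i * b (k - i)) sums ((\<Sum>k. a k) * (\<Sum>k. b k))"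
    unfolding a_def b_def
    by (intro Cauchy_product_sums summable_w \<alpha>_bounds \<beta>_bounds)
  have "measure (PPP_space L) {\<omega> \<in> space (PPP_space L). \<Phi> (fst \<omega>) (fst (snd \<omega>)) (snd (snd \<omega>)) \<and> \<Psi> (fst \<omega>) (fst (snd \<omega>)) (snd (snd \<omega>))}
     = (\<Sum>n. exp (- real L) * (\<Sum>i\<le>n. a i * b (n - i)))"
    using M_formula(2)[where P="\<lambda>n x u. \<Phi> n x u \<and> \<Psi> n x u", OF L m] eqn by simp
  also have "\<dots> = exp (- real L) * ((\<Sum>k. a k) * (\<Sum>k. b k))"
    using sums_mult[OF cs, of "exp (- real L)"] by (simp add: sums_iff)
  finally show ?thesis by (simp add: a_def b_def)
qed

lemma indep:
  "measure (PPP_space L) {\<omega> \<in> space (PPP_space L). \<Phi> (fst \<omega>) (fst (snd \<omega>)) (snd (snd \<omega>)) \<and> \<Psi> (fst \<omega>) (fst (snd \<omega>)) (snd (snd \<omega>))}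
   = measure (PPP_space L) {\<omega> \<in> space (PPP_space L). \<Phi> (fst \<omega>) (fst (snd \<omega>)) (snd (snd \<omega>))} *
     measure (PPP_space L) {\<omega> \<in> space (PPP_space L). \<Psi> (fst \<omega>) (fst (snd \<omega>)) (snd (snd \<omega>))}"
proof -
  interpret c1: core L R \<Phi> "\<lambda>_ _ _. True"
    by unfold_locales (fact L R meas\<Phi> dep\<Phi> sym\<Phi> loc\<Phi> | simp add: UNIV_Q)+
  interpret c2: core L R "\<lambda>_ _ _. True" \<Psi>
    by unfold_locales (fact L R meas\<Psi> dep\<Psi> sym\<Psi> loc\<Psi> | simp add: UNIV_Q)+
  interpret c3: core L R "\<lambda>_ _ _. True" "\<lambda>_ _ _. True"
    by unfold_locales (fact L R | simp add: UNIV_Q)+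
  interpret Mp: prob_space "PPP_space L" unfolding PPP_Q using prob_Q[OF L]
    by (intro prob_space_pair) (auto intro: prob_space_measure_pmf)
  define A where "A = (\<Sum>r. real L ^ r / fact r * \<alpha> r)"
  define B where "B = (\<Sum>q. real L ^ q / fact q * \<beta> q)"
  define A0 where "A0 = (\<Sum>r. real L ^ r / fact r * c3.\<alpha> r)"
  define B0 where "B0 = (\<Sum>q. real L ^ q / fact q * c3.\<beta> q)"
  have f1: "measure (PPP_space L) {\<omega> \<in> space (PPP_space L). \<Phi> (fst \<omega>) (fst (snd \<omega>)) (snd (snd \<omega>))} = exp (- real L) * (A * B0)"
    using c1.formula unfolding A_def B0_def c1.\<alpha>_def \<alpha>_def c1.\<beta>_def c3.\<beta>_def by simp
  have f2: "measure (PPP_space L) {\<omega> \<in> space (PPP_space L). \<Psi> (fst \<omega>) (fst (snd \<omega>)) (snd (snd \<omega>))} = exp (- real L) * (A0 * B)"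
    using c2.formula unfolding B_def A0_def c2.\<beta>_def \<beta>_def c2.\<alpha>_def c3.\<alpha>_def by simp
  have f3: "1 = exp (- real L) * (A0 * B0)"
    using c3.formula Mp.prob_space unfolding A0_def B0_def by simp
  have f: "measure (PPP_space L) {\<omega> \<in> space (PPP_space L). \<Phi> (fst \<omega>) (fst (snd \<omega>)) (snd (snd \<omega>)) \<and> \<Psi> (fst \<omega>) (fst (snd \<omega>)) (snd (snd \<omega>))}
      = exp (- real L) * (A * B)"
    using formula unfolding A_def B_def by simp
  have "exp (- real L) * (A * B0) * (exp (- real L) * (A0 * B)) = exp (- real L) * (A * B) * (exp (- real L) * (A0 * B0))"
    by (simp add: algebra_simps)
  then show ?thesis using f f1 f2 f3[symmetric] by simp
qed

end

definition ed :: "(real \<Rightarrow> real) \<Rightarrow> real \<Rightarrow> real \<Rightarrow> nat \<Rightarrow> (nat \<Rightarrow> real) \<Rightarrow> (nat \<times> nat \<Rightarrow> real) \<Rightarrow> nat \<Rightarrow> nat \<Rightarrow> bool" where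
  "ed H \<tau> \<alpha> L x u k l \<longleftrightarrow> k \<noteq> l \<and> u (min k l, max k l) < htil H \<tau> \<alpha> L (x k) (x l)"

definition I0 :: "(real \<Rightarrow> real) \<Rightarrow> real \<Rightarrow> real \<Rightarrow> nat \<Rightarrow> real set \<Rightarrow> nat \<Rightarrow> (nat \<Rightarrow> real) \<Rightarrow> (nat \<times> nat \<Rightarrow> real) \<Rightarrow> bool" where
  "I0 H \<tau> \<alpha> L S n x u \<longleftrightarrow> card {k. k < n \<and> x k \<in> S} = 1 \<and>
      (\<forall>k<n. x k \<in> S \<longrightarrow> (\<forall>l<n. \<not> ed H \<tau> \<alpha> L x u k l))"

lemma Iind_I0: "Iind H \<tau> \<alpha> L m j (n, x, u) = (if I0 H \<tau> \<alpha> L (segA m j) n x u then 1 else 0)"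
  by (simp add: Iind_def I0_def ed_def edge_def Npts_def Xpt_def Umark_def)

lemma Iind_I0': "Iind H \<tau> \<alpha> L m j \<omega> = (if I0 H \<tau> \<alpha> L (segA m j) (fst \<omega>) (fst (snd \<omega>)) (snd (snd \<omega>)) then 1 else 0)"
  using Iind_I0[of H \<tau> \<alpha> L m j "fst \<omega>" "fst (snd \<omega>)" "snd (snd \<omega>)"] by simp

lemma ed_far:
  assumes "0 \<le> u (min k l, max k l)" "rhoL (real L) (x k) (x l) > RL H \<tau> L powr (1 + 1 / \<alpha>)"
  shows "\<not> ed H \<tau> \<alpha> L x u k l"
  using assms by (simp add: ed_def htil_def)

lemma I0_dep:
  assumes "\<And>k. k < n \<Longrightarrow> x k = x' k" "\<And>a b. a < n \<Longrightarrow> b < n \<Longrightarrow> u (a, b) = u' (a, b)"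
  shows "I0 H \<tau> \<alpha> L S n x u = I0 H \<tau> \<alpha> L S n x' u'"
proof -
  have "{k. k < n \<and> x k \<in> S} = {k. k < n \<and> x' k \<in> S}" using assms(1) by auto
  moreover have "ed H \<tau> \<alpha> L x u k l = ed H \<tau> \<alpha> L x' u' k l" if "k < n" "l < n" for k l
    using that assms by (simp add: ed_def min_def max_def)
  ultimately show ?thesis unfolding I0_def using assms(1) by auto
qed

lemma I0_sym:
  assumes \<pi>: "inj \<pi>" "\<pi> ` {..<n} = {..<n}"
  shows "I0 H \<tau> \<alpha> L S n (x \<circ> \<pi>) (u \<circ> sig \<pi>) = I0 H \<tau> \<alpha> L S n x u"
proof -
  have i: "\<pi> a = \<pi> b \<longleftrightarrow> a = b" for a b using \<pi>(1) by (auto simp: inj_def)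
  have im: "\<pi> ` {k. k < n \<and> x (\<pi> k) \<in> S} = {j. j < n \<and> x j \<in> S}"
  proof (intro set_eqI iffI)
    fix j assume "j \<in> {j. j < n \<and> x j \<in> S}"
    then obtain k where "k < n" "\<pi> k = j" using \<pi>(2) by (metis (mono_tags) imageE lessThan_iff mem_Collect_eq)
    then show "j \<in> \<pi> ` {k. k < n \<and> x (\<pi> k) \<in> S}" using \<open>j \<in> _\<close> by auto
  next
    fix j assume "j \<in> \<pi> ` {k. k < n \<and> x (\<pi> k) \<in> S}"
    then show "j \<in> {j. j < n \<and> x j \<in> S}" using \<pi>(2) by auto
  qed
  have c: "card {k. k < n \<and> (x \<circ> \<pi>) k \<in> S} = card {j. j < n \<and> x j \<in> S}"
    using card_image[of \<pi> "{k. k < n \<and> x (\<pi> k) \<in> S}"] \<pi>(1) im by (simp add: inj_on_def inj_def)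
  have e: "ed H \<tau> \<alpha> L (x \<circ> \<pi>) (u \<circ> sig \<pi>) k l = ed H \<tau> \<alpha> L x u (\<pi> k) (\<pi> l)" for k l
    by (cases "k = l") (auto simp: ed_def sig_min_max i)
  have q: "(\<forall>k<n. P (\<pi> k)) \<longleftrightarrow> (\<forall>j<n. P j)" for P
  proof
    assume a: "\<forall>k<n. P (\<pi> k)"
    show "\<forall>j<n. P j"
    proof (intro allI impI)
      fix j assume "j < n"
      then obtain k where "k < n" "\<pi> k = j" using \<pi>(2) by (metis imageE lessThan_iff)
      then show "P j" using a by auto
    qed
  next
    assume "\<forall>j<n. P j" then show "\<forall>k<n. P (\<pi> k)" using \<pi>(2) by auto
  qed
  have "(\<forall>k<n. (x \<circ> \<pi>) k \<in> S \<longrightarrow> (\<forall>l<n. \<not> ed H \<tau> \<alpha> L (x \<circ> \<pi>) (u \<circ> sig \<pi>) k l))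
      \<longleftrightarrow> (\<forall>k<n. x (\<pi> k) \<in> S \<longrightarrow> (\<forall>l<n. \<not> ed H \<tau> \<alpha> L x u (\<pi> k) (\<pi> l)))" by (simp add: e)
  also have "\<dots> \<longleftrightarrow> (\<forall>k<n. x (\<pi> k) \<in> S \<longrightarrow> (\<forall>l<n. \<not> ed H \<tau> \<alpha> L x u (\<pi> k) l))"
    using q[of "\<lambda>l. \<not> ed H \<tau> \<alpha> L x u _ l"] by simp
  also have "\<dots> \<longleftrightarrow> (\<forall>k<n. x k \<in> S \<longrightarrow> (\<forall>l<n. \<not> ed H \<tau> \<alpha> L x u k l))"
    using q[of "\<lambda>k. x k \<in> S \<longrightarrow> (\<forall>l<n. \<not> ed H \<tau> \<alpha> L x u k l)"] by simp
  finally show ?thesis unfolding I0_def using c by simp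
qed

abbreviation TT :: "(real \<Rightarrow> real) \<Rightarrow> real \<Rightarrow> real \<Rightarrow> nat \<Rightarrow> real" where
  "TT H \<tau> \<alpha> L \<equiv> RL H \<tau> L powr (1 + 1 / \<alpha>)"

lemma I0_locR:
  assumes SR: "S \<subseteq> R"
    and far: "\<And>a b. a \<in> S \<Longrightarrow> 0 \<le> a \<Longrightarrow> a < real L \<Longrightarrow> 0 \<le> b \<Longrightarrow> b < real L \<Longrightarrow> b \<notin> R \<Longrightarrow> rhoL (real L) a b > TT H \<tau> \<alpha> L"
    and g: "good L x u" and rn: "r \<le> n" and c: "\<And>k. k < n \<Longrightarrow> (x k \<in> R \<longleftrightarrow> k < r)"
  shows "I0 H \<tau> \<alpha> L S n x u = I0 H \<tau> \<alpha> L S r x u"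
proof -
  have xr: "k < n \<Longrightarrow> x k \<in> S \<Longrightarrow> k < r" for k using c SR by auto
  have "{k. k < n \<and> x k \<in> S} = {k. k < r \<and> x k \<in> S}" using xr rn by auto
  moreover have "\<not> ed H \<tau> \<alpha> L x u k l" if "k < n" "x k \<in> S" "r \<le> l" "l < n" for k l
  proof (rule ed_far)
    show "0 \<le> u (min k l, max k l)" using g by (simp add: good_def)
    have "x l \<notin> R" using c[of l] that by auto
    then show "rhoL (real L) (x k) (x l) > TT H \<tau> \<alpha> L" using far[of "x k" "x l"] g that by (auto simp: good_def)
  qed
  ultimately show ?thesis unfolding I0_def using xr rn
    by (auto simp: not_less) (meson less_le_trans not_less)+
qed

lemma I0_locC:
  assumes disj: "\<And>a. a \<in> S \<Longrightarrow> 0 \<le> a \<Longrightarrow> a < real L \<Longrightarrow> a \<notin> R"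
    and far: "\<And>a b. a \<in> S \<Longrightarrow> 0 \<le> a \<Longrightarrow> a < real L \<Longrightarrow> 0 \<le> b \<Longrightarrow> b < real L \<Longrightarrow> b \<in> R \<Longrightarrow> rhoL (real L) a b > TT H \<tau> \<alpha> L"
    and g: "good L x u" and rn: "r \<le> n" and c: "\<And>k. k < n \<Longrightarrow> (x k \<in> R \<longleftrightarrow> k < r)"
  shows "I0 H \<tau> \<alpha> L S n x u = I0 H \<tau> \<alpha> L S (n - r) (x \<circ> (\<lambda>k. k + r)) (u \<circ> (\<lambda>(a, b). (a + r, b + r)))"
proof -
  have xr: "k < n \<Longrightarrow> x k \<in> S \<Longrightarrow> r \<le> k" for k using c[of k] disj[of "x k"] g by (force simp: good_def)
  have im: "{k. k < n \<and> x k \<in> S} = (\<lambda>k. k + r) ` {k. k < n - r \<and> x (k + r) \<in> S}"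
  proof (intro set_eqI iffI)
    fix k assume a: "k \<in> {k. k < n \<and> x k \<in> S}"
    then have "r \<le> k" using xr by auto
    then show "k \<in> (\<lambda>k. k + r) ` {k. k < n - r \<and> x (k + r) \<in> S}" using a
      by (intro image_eqI[of _ _ "k - r"]) auto
  qed auto
  have card: "card {k. k < n \<and> x k \<in> S} = card {k. k < n - r \<and> x (k + r) \<in> S}"
    unfolding im by (rule card_image) (auto simp: inj_on_def)
  have e: "ed H \<tau> \<alpha> L (x \<circ> (\<lambda>k. k + r)) (u \<circ> (\<lambda>(a, b). (a + r, b + r))) k l = ed H \<tau> \<alpha> L x u (k + r) (l + r)" for k l
    by (simp add: ed_def min_def max_def)
  have noed: "\<not> ed H \<tau> \<alpha> L x u k l" if "k < n" "x k \<in> S" "l < r" for k l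
  proof (rule ed_far)
    show "0 \<le> u (min k l, max k l)" using g by (simp add: good_def)
    have "x l \<in> R" using c[of l] that rn by auto
    then show "rhoL (real L) (x k) (x l) > TT H \<tau> \<alpha> L" using far[of "x k" "x l"] g that by (auto simp: good_def)
  qed
  have iso: "(\<forall>k<n. x k \<in> S \<longrightarrow> (\<forall>l<n. \<not> ed H \<tau> \<alpha> L x u k l)) \<longleftrightarrow>
        (\<forall>k<n - r. x (k + r) \<in> S \<longrightarrow> (\<forall>l<n - r. \<not> ed H \<tau> \<alpha> L x u (k + r) (l + r)))"
  proof
    assume a: "\<forall>k<n. x k \<in> S \<longrightarrow> (\<forall>l<n. \<not> ed H \<tau> \<alpha> L x u k l)"
    show "\<forall>k<n - r. x (k + r) \<in> S \<longrightarrow> (\<forall>l<n - r. \<not> ed H \<tau> \<alpha> L x u (k + r) (l + r))"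
      using a by (auto simp: less_diff_conv)
  next
    assume a: "\<forall>k<n - r. x (k + r) \<in> S \<longrightarrow> (\<forall>l<n - r. \<not> ed H \<tau> \<alpha> L x u (k + r) (l + r))"
    show "\<forall>k<n. x k \<in> S \<longrightarrow> (\<forall>l<n. \<not> ed H \<tau> \<alpha> L x u k l)"
    proof (intro allI impI)
      fix k l assume k: "k < n" "x k \<in> S" and l: "l < n"
      have rk: "r \<le> k" using xr k by auto
      show "\<not> ed H \<tau> \<alpha> L x u k l"
      proof (cases "l < r")
        case True then show ?thesis using noed k by auto
      next
        case False
        then have "k - r < n - r" "l - r < n - r" "k - r + r = k" "l - r + r = l" using rk k l by auto
        then show ?thesis using a k by metis
      qed
    qed
  qed
  show ?thesis unfolding I0_def card using iso by (simp add: e)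
qed

lemma snd_Q_meas[measurable]: "(\<lambda>\<omega>. snd \<omega> p) \<in> borel_measurable (Q L)"
  unfolding Q_def PU_def by measurable

lemma card_one_iff: "card {k. k < n \<and> P k} = 1 \<longleftrightarrow> (\<exists>k<n. P k \<and> (\<forall>l<n. P l \<longrightarrow> l = k))"
proof -
  have "card {k. k < n \<and> P k} = 1 \<longleftrightarrow> (\<exists>k. {k. k < n \<and> P k} = {k})"
    using card_1_singleton_iff[of "{k. k < n \<and> P k}"] by simp
  also have "\<dots> \<longleftrightarrow> (\<exists>k<n. P k \<and> (\<forall>l<n. P l \<longrightarrow> l = k))" by (auto simp: set_eq_iff)
  finally show ?thesis .
qed

lemma htil_meas:
  assumes H: "H \<in> borel_measurable borel"
    and f: "f \<in> borel_measurable M" and g: "g \<in> borel_measurable M"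
  shows "(\<lambda>\<omega>. htil H \<tau> \<alpha> L (f \<omega>) (g \<omega>)) \<in> borel_measurable M"
proof -
  have r: "(\<lambda>\<omega>. rhoL (real L) (f \<omega>) (g \<omega>)) \<in> borel_measurable M"
    unfolding rhoL_def using f g by measurable
  have "(\<lambda>\<omega>. H (rhoL (real L) (f \<omega>) (g \<omega>) / RL H \<tau> L)) \<in> borel_measurable M"
    using measurable_compose[OF borel_measurable_divide[OF r borel_measurable_const] H] by (simp add: comp_def)
  moreover have "(\<lambda>\<omega>. if rhoL (real L) (f \<omega>) (g \<omega>) \<le> RL H \<tau> L powr (1 + 1 / \<alpha>) then 1 else 0::real) \<in> borel_measurable M"
    using r by measurable
  ultimately show ?thesis unfolding htil_def by (intro borel_measurable_times)
qed

lemma I0_meas: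
  assumes H: "H \<in> borel_measurable borel" and S[measurable]: "S \<in> sets borel"
  shows "{\<omega>. I0 H \<tau> \<alpha> L S n (fst \<omega>) (snd \<omega>)} \<in> sets (Q L)"
proof -
  have hm[measurable]: "(\<lambda>\<omega>. htil H \<tau> \<alpha> L (fst \<omega> k) (fst \<omega> l)) \<in> borel_measurable (Q L)" for k l
    by (intro htil_meas H fst_Q_meas)
  have "{\<omega>. I0 H \<tau> \<alpha> L S n (fst \<omega>) (snd \<omega>)} = {\<omega> \<in> space (Q L).
     (\<exists>k<n. fst \<omega> k \<in> S \<and> (\<forall>l<n. fst \<omega> l \<in> S \<longrightarrow> l = k)) \<and>
     (\<forall>k<n. fst \<omega> k \<in> S \<longrightarrow> (\<forall>l<n. \<not> (k \<noteq> l \<and> snd \<omega> (min k l, max k l) < htil H \<tau> \<alpha> L (fst \<omega> k) (fst \<omega> l))))}"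
    unfolding I0_def card_one_iff ed_def by simp
  also have "\<dots> \<in> sets (Q L)" by measurable
  finally show ?thesis .
qed

lemma rho_le_abs: "rhoL L a b \<le> \<bar>a - b\<bar>" by (simp add: rhoL_def)
lemma rho_sym: "rhoL L a b = rhoL L b a" by (simp add: rhoL_def abs_minus_commute)
lemma rho_self: "L \<ge> 0 \<Longrightarrow> rhoL L a a = 0" by (simp add: rhoL_def)
lemma rho_tri:
  assumes "0 \<le> a" "a \<le> L" "0 \<le> b" "b \<le> L" "0 \<le> c" "c \<le> L"
  shows "rhoL L a c \<le> rhoL L a b + rhoL L b c"
  using assms unfolding rhoL_def min_def by (auto simp: abs_if split: if_splits)
lemma rho_pos:
  assumes "0 \<le> a" "a < L" "0 \<le> b" "b < L" "a \<noteq> b"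
  shows "rhoL L a b > 0"
  using assms unfolding rhoL_def min_def by (auto simp: abs_if)

lemma seg_centre:
  assumes "m > 0" "a \<in> segA m j"
  shows "\<bar>a - centre m j\<bar> \<le> 1 / (2 * real m)"
proof -
  have m: "real m > 0" using assms by simp
  have "(real j - 1) / real m \<le> a" "a < real j / real m" using assms(2) by (auto simp: segA_def)
  then have "real j - 1 \<le> a * real m" "a * real m < real j" using m by (auto simp: field_simps)
  then have "\<bar>2 * a * real m - (2 * real j - 1)\<bar> \<le> 1" by auto
  then have "\<bar>(2 * a * real m - (2 * real j - 1)) / (2 * real m)\<bar> \<le> 1 / (2 * real m)" using m
    by (simp add: abs_divide divide_right_mono)
  moreover have "(2 * a * real m - (2 * real j - 1)) / (2 * real m) = a - centre m j" using m
    by (simp add: centre_def field_simps)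
  ultimately show ?thesis by simp
qed

lemma seg_disj:
  assumes "m > 0" "j \<noteq> j'" "a \<in> segA m j" "a \<in> segA m j'"
  shows False
proof -
  have m: "real m > 0" using assms by simp
  have "real j - 1 \<le> a * real m" "a * real m < real j" "real j' - 1 \<le> a * real m" "a * real m < real j'"
    using assms(3,4) m by (auto simp: segA_def field_simps)
  then have "real j < real j' + 1" "real j' < real j + 1" by auto
  then have "j = j'" by linarith
  then show False using assms(2) by simp
qed

lemma centre_range:
  assumes "m > 0" "j \<in> Gamma m L"
  shows "0 \<le> centre m j" "centre m j \<le> real L"
proof -
  have m: "real m > 0" using assms by simp
  have j: "1 \<le> real j" "real j \<le> real m * real L" using assms(2) by (auto simp: Gamma_def simp flip: of_nat_mult)
  show "0 \<le> centre m j" using m j by (simp add: centre_def)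
  have "2 * real j - 1 \<le> 2 * real m * real L" using j by linarith
  then show "centre m j \<le> real L" using m by (simp add: centre_def field_simps)
qed

lemma geomR:
  fixes T :: real and L m i :: nat and R :: "real set"
  assumes L: "L > 0" and m: "m > 0" and i: "i \<in> Gamma m L" and T0: "T \<ge> 0"
    and Tm: "T > 0 \<longrightarrow> 1 / real m < T"
    and Rdef: "R = (if T = 0 then segA m i else {y. rhoL (real L) (centre m i) y \<le> T + 1 / (2 * real m)})"
  shows "R \<in> sets borel"
    and "segA m i \<subseteq> R"
    and "\<And>a b. a \<in> segA m i \<Longrightarrow> 0 \<le> a \<Longrightarrow> a < real L \<Longrightarrow> 0 \<le> b \<Longrightarrow> b < real L \<Longrightarrow> b \<notin> R \<Longrightarrow> rhoL (real L) a b > T"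
    and "\<And>j a. j \<in> Gamma m L \<Longrightarrow> rhoL (real L) (centre m i) (centre m j) > 3 * T \<Longrightarrow> a \<in> segA m j \<Longrightarrow> 0 \<le> a \<Longrightarrow> a < real L \<Longrightarrow> a \<notin> R"
    and "\<And>j a b. j \<in> Gamma m L \<Longrightarrow> rhoL (real L) (centre m i) (centre m j) > 3 * T \<Longrightarrow> a \<in> segA m j \<Longrightarrow> 0 \<le> a \<Longrightarrow> a < real L
           \<Longrightarrow> 0 \<le> b \<Longrightarrow> b < real L \<Longrightarrow> b \<in> R \<Longrightarrow> rhoL (real L) a b > T"
proof -
  define d where "d = 1 / (2 * real m)"
  define ci where "ci = centre m i"
  have ci: "0 \<le> ci" "ci \<le> real L" using centre_range[OF m i] by (auto simp: ci_def)
  have Lr: "real L \<ge> 0" by simp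
  have dpos: "d > 0" using m by (simp add: d_def)
  have seg: "a \<in> segA m j \<Longrightarrow> rhoL (real L) (centre m j) a \<le> d" for a j
    using seg_centre[OF m, of a j] rho_le_abs[of "real L" "centre m j" a] by (simp add: d_def abs_minus_commute)
  show "R \<in> sets borel"
  proof (cases "T = 0")
    case True then show ?thesis by (simp add: Rdef segA_def)
  next
    case False
    have "{y \<in> space borel. rhoL (real L) (centre m i) y \<le> T + 1 / (2 * real m)} \<in> sets borel"
      unfolding rhoL_def by measurable
    then show ?thesis using False by (simp add: Rdef)
  qed
  show "segA m i \<subseteq> R"
  proof (cases "T = 0")
    case False
    show ?thesis
    proof
      fix x assume "x \<in> segA m i"
      then have "rhoL (real L) (centre m i) x \<le> d" by (rule seg)
      then show "x \<in> R" using False T0 by (simp add: Rdef d_def)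
    qed
  qed (simp add: Rdef)
  show "rhoL (real L) a b > T" if a: "a \<in> segA m i" "0 \<le> a" "a < real L" and b: "0 \<le> b" "b < real L" "b \<notin> R" for a b
  proof (cases "T = 0")
    case True
    then have "a \<noteq> b" using a b by (auto simp: Rdef)
    then show ?thesis using rho_pos[of a "real L" b] a b True by simp
  next
    case False
    have "rhoL (real L) ci b > T + d" using b False by (auto simp: Rdef d_def ci_def)
    moreover have "rhoL (real L) ci b \<le> rhoL (real L) ci a + rhoL (real L) a b"
      using ci a b by (intro rho_tri) auto
    moreover have "rhoL (real L) ci a \<le> d" using seg[OF a(1)] by (simp add: ci_def)
    ultimately show ?thesis by linarith
  qed
  show "a \<notin> R" if j: "j \<in> Gamma m L" "rhoL (real L) (centre m i) (centre m j) > 3 * T"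
    and a: "a \<in> segA m j" "0 \<le> a" "a < real L" for j a
  proof (cases "T = 0")
    case True
    then have "j \<noteq> i" using j(2) rho_self[OF Lr] by auto
    then show ?thesis using seg_disj[OF m, of j i a] a True by (auto simp: Rdef)
  next
    case False
    have cj: "0 \<le> centre m j" "centre m j \<le> real L" using centre_range[OF m j(1)] by auto
    have "rhoL (real L) ci (centre m j) \<le> rhoL (real L) ci a + rhoL (real L) a (centre m j)"
      using ci cj a by (intro rho_tri) auto
    moreover have "rhoL (real L) a (centre m j) \<le> d" using seg[OF a(1)] rho_sym by metis
    moreover have "1 / real m < T" using Tm False T0 by simp
    then have "2 * d < T" by (simp add: d_def)
    ultimately have "rhoL (real L) ci a > T + d" using j(2) T0 by (simp add: ci_def)
    then show ?thesis using False by (auto simp: Rdef d_def ci_def)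
  qed
  show "rhoL (real L) a b > T" if j: "j \<in> Gamma m L" "rhoL (real L) (centre m i) (centre m j) > 3 * T"
    and a: "a \<in> segA m j" "0 \<le> a" "a < real L" and b: "0 \<le> b" "b < real L" "b \<in> R" for j a b
  proof (cases "T = 0")
    case True
    then have "j \<noteq> i" using j(2) rho_self[OF Lr] by auto
    then have "a \<noteq> b" using seg_disj[OF m, of j i a] a b True by (auto simp: Rdef)
    then show ?thesis using rho_pos[of a "real L" b] a b True by simp
  next
    case False
    have cj: "0 \<le> centre m j" "centre m j \<le> real L" using centre_range[OF m j(1)] by auto
    have "rhoL (real L) ci (centre m j) \<le> rhoL (real L) ci b + rhoL (real L) b (centre m j)"
      using ci cj b by (intro rho_tri) auto
    moreover have "rhoL (real L) b (centre m j) \<le> rhoL (real L) b a + rhoL (real L) a (centre m j)"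
      using cj a b by (intro rho_tri) auto
    moreover have "rhoL (real L) a (centre m j) \<le> d" using seg[OF a(1)] rho_sym by metis
    moreover have "rhoL (real L) ci b \<le> T + d" using b False by (auto simp: Rdef d_def ci_def)
    moreover have "1 / real m < T" using Tm False T0 by simp
    then have "2 * d < T" by (simp add: d_def)
    moreover have "rhoL (real L) b a = rhoL (real L) a b" by (rule rho_sym)
    ultimately show ?thesis using j(2) by (simp add: ci_def)
  qed
qed

lemma indep_event:
  fixes H :: "real \<Rightarrow> real" and \<tau> \<alpha> :: real and L m i :: nat and v :: "nat \<Rightarrow> real"
  assumes Hm: "H \<in> borel_measurable borel" and L: "L > 0" and m: "m > 0" and i: "i \<in> Gamma m L"
    and T0: "TT H \<tau> \<alpha> L \<ge> 0" and Tm: "TT H \<tau> \<alpha> L > 0 \<Longrightarrow> 1 / real m < TT H \<tau> \<alpha> L"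
  defines "C \<equiv> Gamma m L - Bnb H \<tau> \<alpha> L m i"
  defines "\<Phi> \<equiv> I0 H \<tau> \<alpha> L (segA m i)"
  defines "\<Psi> \<equiv> (\<lambda>n x u. \<forall>j\<in>C. (if I0 H \<tau> \<alpha> L (segA m j) n x u then 1 else 0::real) = v j)"
  shows "measure (PPP_space L) {\<omega> \<in> space (PPP_space L). \<Phi> (fst \<omega>) (fst (snd \<omega>)) (snd (snd \<omega>)) \<and> \<Psi> (fst \<omega>) (fst (snd \<omega>)) (snd (snd \<omega>))}
   = measure (PPP_space L) {\<omega> \<in> space (PPP_space L). \<Phi> (fst \<omega>) (fst (snd \<omega>)) (snd (snd \<omega>))} *
     measure (PPP_space L) {\<omega> \<in> space (PPP_space L). \<Psi> (fst \<omega>) (fst (snd \<omega>)) (snd (snd \<omega>))}"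
proof -
  define T where "T = TT H \<tau> \<alpha> L"
  define R where "R = (if T = 0 then segA m i else {y. rhoL (real L) (centre m i) y \<le> T + 1 / (2 * real m)})"
  have T0': "T \<ge> 0" using T0 by (simp add: T_def)
  have Tm': "T > 0 \<longrightarrow> 1 / real m < T" using Tm by (simp add: T_def)
  note g = geomR[OF L m i T0' Tm' R_def]
  have segm[measurable]: "segA m j \<in> sets borel" for j by (simp add: segA_def)
  have fC: "finite C" by (simp add: C_def Gamma_def)
  have Cj: "j \<in> C \<Longrightarrow> j \<in> Gamma m L \<and> rhoL (real L) (centre m i) (centre m j) > 3 * T" for j
    by (auto simp: C_def Bnb_def T_def not_le)
  interpret c: core L R \<Phi> \<Psi>
  proof unfold_locales
    show "0 < L" by (rule L)
    show "R \<in> sets borel" by (rule g(1))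
    show "{\<omega>. \<Phi> n (fst \<omega>) (snd \<omega>)} \<in> sets (Q L)" for n
      unfolding \<Phi>_def by (rule I0_meas[OF Hm segm])
    show "{\<omega>. \<Psi> n (fst \<omega>) (snd \<omega>)} \<in> sets (Q L)" for n
    proof -
      have fm[measurable]: "(\<lambda>\<omega>. if I0 H \<tau> \<alpha> L (segA m j) n (fst \<omega>) (snd \<omega>) then 1 else 0::real) \<in> borel_measurable (Q L)" for j
      proof -
        have "(\<lambda>\<omega>. if \<omega> \<in> {\<omega>. I0 H \<tau> \<alpha> L (segA m j) n (fst \<omega>) (snd \<omega>)} then 1 else 0::real) \<in> borel_measurable (Q L)"
          using I0_meas[OF Hm segm, of \<tau> \<alpha> L j n] by (intro measurable_If_set) auto
        then show ?thesis by simp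
      qed
      have "{\<omega>. \<Psi> n (fst \<omega>) (snd \<omega>)} = {\<omega> \<in> space (Q L). \<forall>j\<in>C. (if I0 H \<tau> \<alpha> L (segA m j) n (fst \<omega>) (snd \<omega>) then 1 else 0::real) = v j}"
        by (simp add: \<Psi>_def)
      also have "\<dots> \<in> sets (Q L)" using fC by measurable
      finally show ?thesis .
    qed
    show "\<Phi> n x u = \<Phi> n x' u'" if "\<And>k. k < n \<Longrightarrow> x k = x' k" "\<And>a b. a < n \<Longrightarrow> b < n \<Longrightarrow> u (a, b) = u' (a, b)" for n x x' u u'
      unfolding \<Phi>_def using that by (rule I0_dep)
    show "\<Psi> n x u = \<Psi> n x' u'" if "\<And>k. k < n \<Longrightarrow> x k = x' k" "\<And>a b. a < n \<Longrightarrow> b < n \<Longrightarrow> u (a, b) = u' (a, b)" for n x x' u u'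
      unfolding \<Psi>_def using I0_dep[where n=n and x=x and x'=x' and u=u and u'=u', OF that] by simp
    show "\<Phi> n (x \<circ> \<pi>) (u \<circ> sig \<pi>) = \<Phi> n x u" if "inj \<pi>" "\<pi> ` {..<n} = {..<n}" for n \<pi> x u
      unfolding \<Phi>_def using that by (rule I0_sym)
    show "\<Psi> n (x \<circ> \<pi>) (u \<circ> sig \<pi>) = \<Psi> n x u" if "inj \<pi>" "\<pi> ` {..<n} = {..<n}" for n \<pi> x u
      unfolding \<Psi>_def using I0_sym[OF that] by simp
    show "\<Phi> n x u = \<Phi> r x u" if "good L x u" "r \<le> n" "\<And>k. k < n \<Longrightarrow> (x k \<in> R \<longleftrightarrow> k < r)" for n r x u
      unfolding \<Phi>_def
    proof (rule I0_locR[where R=R])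
      show "segA m i \<subseteq> R" by (rule g(2))
      show "rhoL (real L) a b > TT H \<tau> \<alpha> L" if "a \<in> segA m i" "0 \<le> a" "a < real L" "0 \<le> b" "b < real L" "b \<notin> R" for a b
        using g(3)[OF that] by (simp add: T_def)
    qed (use that in auto)
    show "\<Psi> n x u = \<Psi> (n - r) (x \<circ> (\<lambda>k. k + r)) (u \<circ> (\<lambda>(a, b). (a + r, b + r)))"
      if gd: "good L x u" and rn: "r \<le> n" and cc: "\<And>k. k < n \<Longrightarrow> (x k \<in> R \<longleftrightarrow> k < r)" for n r x u
    proof -
      have "I0 H \<tau> \<alpha> L (segA m j) n x u = I0 H \<tau> \<alpha> L (segA m j) (n - r) (x \<circ> (\<lambda>k. k + r)) (u \<circ> (\<lambda>(a, b). (a + r, b + r)))"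
        if j: "j \<in> C" for j
      proof (rule I0_locC[where R=R])
        show "a \<notin> R" if "a \<in> segA m j" "0 \<le> a" "a < real L" for a
          using g(4)[of j a] Cj[OF j] that by auto
        show "rhoL (real L) a b > TT H \<tau> \<alpha> L" if "a \<in> segA m j" "0 \<le> a" "a < real L" "0 \<le> b" "b < real L" "b \<in> R" for a b
          using g(5)[of j a b] Cj[OF j] that by (auto simp: T_def)
      qed (use gd rn cc in auto)
      then show ?thesis unfolding \<Psi>_def by simp
    qed
  qed
  show ?thesis by (rule c.indep)
qed

lemma space_PPP[simp]: "space (PPP_space L) = UNIV"
  by (simp add: PPP_Q space_pair_measure)

lemma ce_const:
  fixes H :: "real \<Rightarrow> real" and \<tau> \<alpha> :: real and L m i :: nat
  assumes Hm: "H \<in> borel_measurable borel" and L: "L > 0" and m: "m > 0" and i: "i \<in> Gamma m L"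
    and T0: "TT H \<tau> \<alpha> L \<ge> 0" and Tm: "TT H \<tau> \<alpha> L > 0 \<Longrightarrow> 1 / real m < TT H \<tau> \<alpha> L"
  shows "AE \<omega> in PPP_space L. real_cond_exp (PPP_space L) (Fout H \<tau> \<alpha> L m i) (Iind H \<tau> \<alpha> L m i) \<omega> = pI H \<tau> \<alpha> L m i"
proof -
  define M where "M = PPP_space L"
  define C where "C = Gamma m L - Bnb H \<tau> \<alpha> L m i"
  define F where "F = Fout H \<tau> \<alpha> L m i"
  define S where "S j = {\<omega> \<in> space M. I0 H \<tau> \<alpha> L (segA m j) (fst \<omega>) (fst (snd \<omega>)) (snd (snd \<omega>))}" for j
  define Iv where "Iv j = Iind H \<tau> \<alpha> L m j" for j
  interpret Mp: prob_space M unfolding M_def PPP_Q using prob_Q[OF L]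
    by (intro prob_space_pair) (auto intro: prob_space_measure_pmf)
  have segm: "segA m j \<in> sets borel" for j by (simp add: segA_def)
  have Sm: "S j \<in> sets M" for j
    unfolding S_def M_def by (rule M_formula(1)[OF L I0_meas[OF Hm segm]])
  have Iv_ind: "Iv j = indicator (S j)" for j
    by (auto simp: fun_eq_iff Iv_def Iind_I0' S_def M_def indicator_def)
  have Iv_meas[measurable]: "Iv j \<in> borel_measurable M" for j
    unfolding Iv_ind using Sm by (intro borel_measurable_indicator)
  have fC: "finite C" by (simp add: C_def Gamma_def)
  define G where "G = (\<Union>j\<in>C. {Iv j -` A \<inter> space M | A. A \<in> sets borel})"
  have GM: "G \<subseteq> sets M" unfolding G_def using Iv_meas by (auto intro: measurable_sets)
  have GP: "G \<subseteq> Pow (space M)" unfolding G_def by auto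
  have FG: "F = sigma (space M) G" by (simp add: F_def Fout_def G_def M_def Iv_def C_def)
  have sF: "sets F = sigma_sets (space M) G" unfolding FG using GP by (rule sets_measure_of)
  have spF: "space F = space M" unfolding FG using GP by (rule space_measure_of)
  have subalg: "subalgebra M F" unfolding subalgebra_def sF spF
    using GM by (simp add: sets.sigma_sets_subset)
  interpret fs: finite_measure_subalgebra M F by unfold_locales (rule subalg)
  define J where "J \<omega> = (\<lambda>j\<in>C. Iv j \<omega>)" for \<omega>
  have charF: "\<exists>V. A = {\<omega> \<in> space M. J \<omega> \<in> V}" if "A \<in> sigma_sets (space M) G" for A
    using that
  proof (induction rule: sigma_sets.induct)
    case (Basic a)
    then obtain j B where j: "j \<in> C" and a: "a = Iv j -` B \<inter> space M" by (auto simp: G_def)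
    show ?case using j a by (intro exI[of _ "{f. f j \<in> B}"]) (auto simp: J_def)
  next
    case Empty
    show ?case by (intro exI[of _ "{}"]) auto
  next
    case (Compl a)
    then obtain V where "a = {\<omega> \<in> space M. J \<omega> \<in> V}" by blast
    then show ?case by (intro exI[of _ "- V"]) auto
  next
    case (Union a)
    then have "\<forall>k. \<exists>V. a k = {\<omega> \<in> space M. J \<omega> \<in> V}" by blast
    from choice[OF this] obtain Vf where Vf: "\<forall>k. a k = {\<omega> \<in> space M. J \<omega> \<in> Vf k}" by blast
    have "(\<Union>k. a k) = {\<omega> \<in> space M. J \<omega> \<in> (\<Union>k. Vf k)}" using Vf by auto
    then show ?case by blast
  qed
  define E where "E v = {\<omega> \<in> space M. \<forall>j\<in>C. Iv j \<omega> = v j}" for v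
  have Em: "E v \<in> sets M" for v
  proof -
    have "E v = {\<omega> \<in> space M. \<forall>j\<in>C. Iv j \<omega> = v j}" by (simp add: E_def)
    also have "\<dots> \<in> sets M" using fC by measurable
    finally show ?thesis .
  qed
  have ind: "measure M (S i \<inter> E v) = measure M (S i) * measure M (E v)" for v
  proof -
    have "measure M (S i \<inter> E v) = measure M {\<omega> \<in> space M. I0 H \<tau> \<alpha> L (segA m i) (fst \<omega>) (fst (snd \<omega>)) (snd (snd \<omega>)) \<and>
            (\<forall>j\<in>C. (if I0 H \<tau> \<alpha> L (segA m j) (fst \<omega>) (fst (snd \<omega>)) (snd (snd \<omega>)) then 1 else 0::real) = v j)}"
      by (rule arg_cong[where f="measure M"]) (auto simp: S_def E_def Iv_def Iind_I0')
    also have "\<dots> = measure M (S i) * measure M {\<omega> \<in> space M.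
            (\<forall>j\<in>C. (if I0 H \<tau> \<alpha> L (segA m j) (fst \<omega>) (fst (snd \<omega>)) (snd (snd \<omega>)) then 1 else 0::real) = v j)}"
      unfolding M_def S_def C_def by (rule indep_event[OF Hm L m i T0 Tm])
    also have "{\<omega> \<in> space M. (\<forall>j\<in>C. (if I0 H \<tau> \<alpha> L (segA m j) (fst \<omega>) (fst (snd \<omega>)) (snd (snd \<omega>)) then 1 else 0::real) = v j)} = E v"
      by (auto simp: E_def Iv_def Iind_I0')
    finally show ?thesis .
  qed
  have key: "measure M (A \<inter> S i) = measure M (S i) * measure M A" if A: "A \<in> sets F" for A
  proof -
    obtain V where AV: "A = {\<omega> \<in> space M. J \<omega> \<in> V}" using charF A sF by auto
    define Vf where "Vf = V \<inter> PiE C (\<lambda>_. {0, 1::real})"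
    have fVf: "finite Vf" unfolding Vf_def using fC by (intro finite_Int[OF disjI2] finite_PiE) auto
    have J01: "J \<omega> \<in> PiE C (\<lambda>_. {0, 1::real})" for \<omega>
      by (auto simp: J_def Iv_ind indicator_def PiE_iff)
    have Jeq: "J \<omega> = v \<longleftrightarrow> (\<forall>j\<in>C. Iv j \<omega> = v j)" if "v \<in> PiE C (\<lambda>_. {0, 1::real})" for \<omega> v
      using that by (auto simp: J_def PiE_iff fun_eq_iff extensional_def)
    have Aun: "A = (\<Union>v\<in>Vf. E v)"
    proof (intro set_eqI iffI)
      fix \<omega> assume "\<omega> \<in> A"
      then show "\<omega> \<in> (\<Union>v\<in>Vf. E v)" using J01[of \<omega>] Jeq[OF J01[of \<omega>]]
        by (intro UN_I[of "J \<omega>"]) (auto simp: AV Vf_def E_def J_def)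
    next
      fix \<omega> assume "\<omega> \<in> (\<Union>v\<in>Vf. E v)"
      then obtain v where "v \<in> Vf" "\<omega> \<in> E v" by auto
      then show "\<omega> \<in> A" using Jeq[of v \<omega>] by (auto simp: AV Vf_def E_def)
    qed
    have disj: "disjoint_family_on E Vf"
      unfolding disjoint_family_on_def
    proof (intro ballI impI)
      fix v w assume vw: "v \<in> Vf" "w \<in> Vf" "v \<noteq> w"
      show "E v \<inter> E w = {}"
      proof (rule ccontr)
        assume "E v \<inter> E w \<noteq> {}"
        then obtain \<omega> where "\<omega> \<in> E v" "\<omega> \<in> E w" by auto
        then have "\<And>j. j \<in> C \<Longrightarrow> v j = w j" by (auto simp: E_def)
        then have "v = w" using vw by (intro PiE_ext[of v C "\<lambda>_. {0, 1::real}" w]) (auto simp: Vf_def)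
        then show False using vw by simp
      qed
    qed
    have disj2: "disjoint_family_on (\<lambda>v. S i \<inter> E v) Vf"
      using disj by (auto simp: disjoint_family_on_def)
    have "measure M (A \<inter> S i) = measure M (\<Union>v\<in>Vf. S i \<inter> E v)" unfolding Aun by (rule arg_cong[where f="measure M"]) auto
    also have "\<dots> = (\<Sum>v\<in>Vf. measure M (S i \<inter> E v))"
      using fVf disj2 Sm Em by (intro measure_finite_Union) auto
    also have "\<dots> = (\<Sum>v\<in>Vf. measure M (S i) * measure M (E v))" by (simp add: ind)
    also have "\<dots> = measure M (S i) * (\<Sum>v\<in>Vf. measure M (E v))" by (simp add: sum_distrib_left)
    also have "(\<Sum>v\<in>Vf. measure M (E v)) = measure M A"
      unfolding Aun using fVf disj Em by (intro measure_finite_Union[symmetric]) auto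
    finally show ?thesis .
  qed
  have pI: "pI H \<tau> \<alpha> L m i = measure M (S i)"
    by (simp add: pI_def M_def[symmetric] Iv_def[symmetric] Iv_ind Sm)
  have "AE \<omega> in M. real_cond_exp M F (Iv i) \<omega> = pI H \<tau> \<alpha> L m i"
  proof (rule fs.real_cond_exp_charact)
    fix A assume A: "A \<in> sets F"
    then have AM: "A \<in> sets M" using subalg by (auto simp: subalgebra_def)
    have "(\<integral>x\<in>A. Iv i x \<partial>M) = measure M (A \<inter> S i)"
      unfolding set_lebesgue_integral_def Iv_ind using AM Sm
      by (simp add: indicator_inter_arith[symmetric] Int_absorb2 sets.sets_into_space)
    also have "\<dots> = (\<integral>x\<in>A. pI H \<tau> \<alpha> L m i \<partial>M)"
      unfolding set_lebesgue_integral_def using key[OF A] AM by (simp add: pI mult.commute)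
    finally show "(\<integral>x\<in>A. Iv i x \<partial>M) = (\<integral>x\<in>A. pI H \<tau> \<alpha> L m i \<partial>M)" .
  next
    show "integrable M (Iv i)" unfolding Iv_ind using Sm by (intro Mp.integrable_const_bound[where B=1]) auto
    show "integrable M (\<lambda>x. pI H \<tau> \<alpha> L m i)" by simp
    show "(\<lambda>x. pI H \<tau> \<alpha> L m i) \<in> borel_measurable F" by simp
  qed
  from this[unfolded M_def F_def Iv_def] show ?thesis .
qed

theorem lemma4:
  fixes H :: "real \<Rightarrow> real" and \<tau> \<alpha> :: real and L :: nat
  assumes "H \<in> borel_measurable borel"
    and "\<And>x. x \<ge> 0 \<Longrightarrow> 0 \<le> H x \<and> H x \<le> 1"
    and "set_integrable lborel {0..} H"
    and "(LBINT x:{0..}. (H x)\<^sup>2) < (LBINT x:{0..}. H x)"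
    and "\<tau> > 0" and "\<alpha> > 0" and "L > 0"
  shows "\<exists>m0. \<forall>m \<ge> m0. b3 H \<tau> \<alpha> L m = 0"
proof -
  define T where "T = TT H \<tau> \<alpha> L"
  have T0: "TT H \<tau> \<alpha> L \<ge> 0" by simp
  define m0 where "m0 = (if T = 0 then 1 else nat \<lceil>1 / T\<rceil> + 1)"
  show ?thesis
  proof (intro exI[of _ m0] allI impI)
    fix m assume mm: "m0 \<le> m"
    have m: "m > 0" using mm by (auto simp: m0_def split: if_splits)
    have Tm: "1 / real m < TT H \<tau> \<alpha> L" if Tp: "TT H \<tau> \<alpha> L > 0"
    proof -
      have Tp': "T > 0" using Tp by (simp add: T_def)
      then have "m \<ge> nat \<lceil>1 / T\<rceil> + 1" using mm by (simp add: m0_def)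
      then have "real m \<ge> real (nat \<lceil>1 / T\<rceil>) + 1" by linarith
      moreover have "real (nat \<lceil>1 / T\<rceil>) \<ge> 1 / T" by (rule real_nat_ceiling_ge)
      ultimately have "1 / T < real m" by linarith
      then have "1 < real m * T" using Tp' by (simp add: field_simps)
      then have "1 / real m < T" using m by (simp add: field_simps)
      then show ?thesis by (simp add: T_def)
    qed
    have "b3 H \<tau> \<alpha> L m = (\<Sum>i\<in>Gamma m L. 0)"
      unfolding b3_def
    proof (rule sum.cong[OF refl])
      fix i assume i: "i \<in> Gamma m L"
      have ae: "AE \<omega> in PPP_space L. real_cond_exp (PPP_space L) (Fout H \<tau> \<alpha> L m i) (Iind H \<tau> \<alpha> L m i) \<omega> = pI H \<tau> \<alpha> L m i"
        by (rule ce_const[OF assms(1) assms(7) m i T0 Tm])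
      have "(\<integral>\<omega>. \<bar>real_cond_exp (PPP_space L) (Fout H \<tau> \<alpha> L m i) (Iind H \<tau> \<alpha> L m i) \<omega> - pI H \<tau> \<alpha> L m i\<bar> \<partial>PPP_space L)
          = (\<integral>\<omega>. 0 \<partial>PPP_space L)"
        by (rule integral_cong_AE) (use ae in \<open>auto elim!: AE_mp\<close>)
      then show "(\<integral>\<omega>. \<bar>real_cond_exp (PPP_space L) (Fout H \<tau> \<alpha> L m i) (Iind H \<tau> \<alpha> L m i) \<omega> - pI H \<tau> \<alpha> L m i\<bar> \<partial>PPP_space L) = 0"
        by simp
    qed
    then show "b3 H \<tau> \<alpha> L m = 0" by simp
  qed
qed

end
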